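(* Let $p>2$ be prime, let $\mathcal{C}$ be a $\mathbb{Z}_p\mathbb{Z}_{p^2}$-additive code of type $(\alpha,\beta;\gamma,\delta;\kappa)$ with generator matrix $\mathcal{G}$, and let $C=\Phi(\mathcal{C})$ with $\ker(C)=\gamma+2\delta-\bar k$, where $\bar k\in\{1,2,\ldots,\delta\}$. Then there exists a set $\{\mathbf{v}_1,\ldots,\mathbf{v}_{\bar k}\}$ of rows of order $p^2$ in $\mathcal{G}$ with $\Phi(\mathbf{v}_i)\notin K(C)$ such that $$C=\bigcup_{a_1,\ldots,a_{\bar k}\in\mathbb{Z}_p}\left(K(C)+\Phi\left(\sum_{i=1}^{\bar k}a_i\mathbf{v}_i\right)\right).$$
   Context: A $\mathbb{Z}_p\mathbb{Z}_{p^2}$-additive code $\mathcal{C}$ is a subgroup of $\mathbb{Z}_p^\alpha\times\mathbb{Z}_{p^2}^\beta$; as a group $\mathcal{C}\cong\mathbb{Z}_p^\gamma\times\mathbb{Z}_{p^2}^\delta$, and if $\kappa$ is the $\mathbb{Z}_p$-dimension of the projection onto the first $\alpha$ coordinates of the subcode of codewords of order dividing $p$, $\mathcal{C}$ has type $(\alpha,\beta;\gamma,\delta;\kappa)$. A generator matrix $\mathcal{G}$ has rows $\mathbf{u}_1,\ldots,\mathbf{u}_\gamma$ of order $p$ and rows of order $p^2$, $\delta$ in number, such that every codeword is uniquely $\sum\lambda_i\mathbf{u}_i+\sum\nu_j\mathbf{v}_j$ ($\lambda_i\in\mathbb{Z}_p$, $\nu_j\in\mathbb{Z}_{p^2}$).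 The Gray map is $\phi(\theta)=\theta''(1,\ldots,1)+\theta'(0,1,\ldots,p-1)$ for $\theta=\theta''p+\theta'\in\mathbb{Z}_{p^2}$, $\theta',\theta''\in\{0,\ldots,p-1\}$, and $\Phi(\mathbf{x},\mathbf{y})=(\mathbf{x},\phi(y_1),\ldots,\phi(y_\beta))$. The kernel of $C\subseteq\mathbb{Z}_p^n$ is $K(C)=\{\mathbf{x}\in\mathbb{Z}_p^n\mid C+\mathbf{x}=C\}$, a $\mathbb{Z}_p$-linear space, and $\ker(C)$ is its dimension. Elements $a_i\in\mathbb{Z}_p$ are identified with integers in $\{0,\ldots,p-1\}$ when multiplying vectors. *)

theory Defs
  imports "HOL-Computational_Algebra.Primes"
begin

text \<open>Vectors over Z_m are int lists with entries in {0..<m}; a mixed vector in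
Z_p^alpha x Z_{p^2}^beta is a pair of int lists.\<close>

definition vadd :: "int \<Rightarrow> int list \<Rightarrow> int list \<Rightarrow> int list" where
  "vadd m xs ys = map2 (\<lambda>a b. (a + b) mod m) xs ys"

definition vsmul :: "int \<Rightarrow> int \<Rightarrow> int list \<Rightarrow> int list" where
  "vsmul m c xs = map (\<lambda>a. (c * a) mod m) xs"

definition madd :: "int \<Rightarrow> int list \<times> int list \<Rightarrow> int list \<times> int list \<Rightarrow> int list \<times> int list" where
  "madd p u v = (vadd p (fst u) (fst v), vadd (p^2) (snd u) (snd v))"

definition msmul :: "int \<Rightarrow> int \<Rightarrow> int list \<times> int list \<Rightarrow> int list \<times> int list" where
  "msmul p c u = (vsmul p c (fst u), vsmul (p^2) c (snd u))"

definition mzero :: "nat \<Rightarrow> nat \<Rightarrow> int list \<times> int list" where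
  "mzero \<alpha> \<beta> = (replicate \<alpha> 0, replicate \<beta> 0)"

definition is_mixed :: "int \<Rightarrow> nat \<Rightarrow> nat \<Rightarrow> int list \<times> int list \<Rightarrow> bool" where
  "is_mixed p \<alpha> \<beta> u \<longleftrightarrow> length (fst u) = \<alpha> \<and> length (snd u) = \<beta> \<and>
     set (fst u) \<subseteq> {0..<p} \<and> set (snd u) \<subseteq> {0..<p^2}"

definition msum :: "int \<Rightarrow> nat \<Rightarrow> nat \<Rightarrow> (int list \<times> int list) list \<Rightarrow> int list \<times> int list" where
  "msum p \<alpha> \<beta> us = foldr (madd p) us (mzero \<alpha> \<beta>)"

definition additive_code :: "int \<Rightarrow> nat \<Rightarrow> nat \<Rightarrow> (int list \<times> int list) set \<Rightarrow> bool" where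
  "additive_code p \<alpha> \<beta> C \<longleftrightarrow> C \<subseteq> {u. is_mixed p \<alpha> \<beta> u} \<and> mzero \<alpha> \<beta> \<in> C \<and>
     (\<forall>u\<in>C. \<forall>v\<in>C. madd p u v \<in> C) \<and> (\<forall>u\<in>C. msmul p (-1) u \<in> C)"

text \<open>Generator matrix: rows us (order p, gamma = length us) and vs (order p^2,
delta = length vs) such that every codeword is uniquely a combination.\<close>
definition generator_matrix :: "int \<Rightarrow> nat \<Rightarrow> nat \<Rightarrow> (int list \<times> int list) set \<Rightarrow>
    (int list \<times> int list) list \<Rightarrow> (int list \<times> int list) list \<Rightarrow> bool" where
  "generator_matrix p \<alpha> \<beta> C us vs \<longleftrightarrow>
     set us \<subseteq> C \<and> set vs \<subseteq> C \<and>
     (\<forall>u\<in>set us. u \<noteq> mzero \<alpha> \<beta> \<and> msmul p p u = mzero \<alpha> \<beta>) \<and>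
     (\<forall>v\<in>set vs. msmul p p v \<noteq> mzero \<alpha> \<beta> \<and> msmul p (p^2) v = mzero \<alpha> \<beta>) \<and>
     (\<forall>c\<in>C. \<exists>!lc. length (fst lc) = length us \<and> length (snd lc) = length vs \<and>
        set (fst lc) \<subseteq> {0..<p} \<and> set (snd lc) \<subseteq> {0..<p^2} \<and>
        c = madd p (msum p \<alpha> \<beta> (map2 (msmul p) (fst lc) us))
                   (msum p \<alpha> \<beta> (map2 (msmul p) (snd lc) vs)))"

definition phi :: "int \<Rightarrow> int \<Rightarrow> int list" where
  "phi p \<theta> = map (\<lambda>j. (\<theta> div p + (\<theta> mod p) * j) mod p) [0..p-1]"

definition Phi :: "int \<Rightarrow> int list \<times> int list \<Rightarrow> int list" where
  "Phi p u = fst u @ concat (map (phi p) (snd u))"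

definition kernel :: "int \<Rightarrow> nat \<Rightarrow> int list set \<Rightarrow> int list set" where
  "kernel p n D = {x. length x = n \<and> set x \<subseteq> {0..<p} \<and> (\<lambda>c. vadd p c x) ` D = D}"

definition lincomb :: "int \<Rightarrow> nat \<Rightarrow> int list \<Rightarrow> int list list \<Rightarrow> int list" where
  "lincomb p n cs B = foldr (vadd p) (map2 (vsmul p) cs B) (replicate n 0)"

definition zp_dim :: "int \<Rightarrow> nat \<Rightarrow> int list set \<Rightarrow> nat" where
  "zp_dim p n K = (THE d. \<exists>B. length B = d \<and> set B \<subseteq> K \<and>
      (\<forall>x\<in>K. \<exists>!cs. length cs = d \<and> set cs \<subseteq> {0..<p} \<and> x = lincomb p n cs B))"

end

theory Submission
  imports Defs "HOL-Algebra.Generated_Groups"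
begin

hide_const (open) Coset.kernel


definition Sm :: "('a, 'b) monoid_scheme \<Rightarrow> 'a list \<Rightarrow> nat list \<Rightarrow> (nat \<Rightarrow> int) \<Rightarrow> 'a" where
  "Sm G gs ix a = foldr (\<lambda>x y. x \<otimes>\<^bsub>G\<^esub> y) (map (\<lambda>j. (gs ! (ix ! j)) [^]\<^bsub>G\<^esub> a j) [0..<length ix]) \<one>\<^bsub>G\<^esub>"

definition Wset :: "('a, 'b) monoid_scheme \<Rightarrow> 'a set \<Rightarrow> int \<Rightarrow> 'a list \<Rightarrow> nat list \<Rightarrow> 'a set" where
  "Wset G H p gs ix = {h \<otimes>\<^bsub>G\<^esub> Sm G gs ix a | h a. h \<in> H \<and> (\<forall>j<length ix. a j \<in> {0..<p})}"

definition ChainInv :: "('a, 'b) monoid_scheme \<Rightarrow> 'a set \<Rightarrow> 'a set \<Rightarrow> int \<Rightarrow> 'a list \<Rightarrow> nat list \<Rightarrow> bool" where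
  "ChainInv G H E p gs ix \<longleftrightarrow> distinct ix \<and> set ix \<subseteq> {..<length gs} \<and>
     (\<forall>j\<in>set ix. gs ! j \<notin> H \<and> gs ! j \<in> Wset G H p gs ix) \<and>
     subgroup (Wset G H p gs ix) G \<and> H \<subseteq> Wset G H p gs ix \<and> Wset G H p gs ix \<subseteq> E \<and>
     card (Wset G H p gs ix) = nat p ^ length ix * card H"

context comm_group
begin

lemma foldr_closed: "set xs \<subseteq> carrier G \<Longrightarrow> foldr (\<lambda>x y. x \<otimes> y) xs \<one> \<in> carrier G"
  by (induction xs) auto

lemma foldr_sub: "subgroup S G \<Longrightarrow> set xs \<subseteq> S \<Longrightarrow> foldr (\<lambda>x y. x \<otimes> y) xs \<one> \<in> S"
  by (induction xs) (auto simp: subgroup.m_closed subgroup.one_closed)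

lemma foldr_shift: "set xs \<subseteq> carrier G \<Longrightarrow> z \<in> carrier G \<Longrightarrow>
   foldr (\<lambda>x y. x \<otimes> y) xs z = foldr (\<lambda>x y. x \<otimes> y) xs \<one> \<otimes> z"
  by (induction xs) (auto simp: m_assoc foldr_closed)

lemma Sm_closed_sub:
  assumes "subgroup S G" "\<forall>j<length ix. gs ! (ix ! j) \<in> S"
  shows "Sm G gs ix a \<in> S"
  unfolding Sm_def
proof (rule foldr_sub[OF assms(1)])
  interpret S: group "G\<lparr>carrier := S\<rparr>" using assms(1) by (simp add: subgroup.subgroup_is_group is_group)
  show "set (map (\<lambda>j. gs ! (ix ! j) [^] a j) [0..<length ix]) \<subseteq> S"
    using assms subgroup_int_pow_closed by auto
qed

lemma Sm_closed:
  assumes "set gs \<subseteq> carrier G" "set ix \<subseteq> {..<length gs}"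
  shows "Sm G gs ix a \<in> carrier G"
  using Sm_closed_sub[where S="carrier G" and gs=gs and ix=ix and a=a] assms subgroup_self
  by (metis lessThan_iff nth_mem subset_code(1))

lemma Sm_cong: "(\<And>j. j < length ix \<Longrightarrow> a j = b j) \<Longrightarrow> Sm G gs ix a = Sm G gs ix b"
  unfolding Sm_def by (intro arg_cong2[where f="\<lambda>x y. foldr _ x y"] map_cong) auto

lemma Sm_snoc:
  assumes "set gs \<subseteq> carrier G" "set ix \<subseteq> {..<length gs}" "i < length gs"
  shows "Sm G gs (ix @ [i]) a = Sm G gs ix a \<otimes> gs ! i [^] a (length ix)"
proof -
  have m: "map (\<lambda>j. gs ! ((ix @ [i]) ! j) [^] a j) [0..<length (ix @ [i])]
     = map (\<lambda>j. gs ! (ix ! j) [^] a j) [0..<length ix] @ [gs ! i [^] a (length ix)]"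
    by (auto simp: nth_append)
  have gi: "gs ! i [^] a (length ix) \<in> carrier G" using assms nth_mem by (metis int_pow_closed subsetD)
  have s: "set (map (\<lambda>j. gs ! (ix ! j) [^] a j) [0..<length ix]) \<subseteq> carrier G"
    using assms by (auto intro!: int_pow_closed) (meson lessThan_iff nth_mem subsetD)
  show ?thesis unfolding Sm_def m
    using foldr_shift[OF s, of "gs ! i [^] a (length ix) \<otimes> \<one>"] gi by simp
qed

lemma Wset_Nil: "H \<subseteq> carrier G \<Longrightarrow> Wset G H p gs [] = H"
  unfolding Wset_def Sm_def by force

lemma Wset_snoc:
  assumes "set gs \<subseteq> carrier G" "set ix \<subseteq> {..<length gs}" "i < length gs" "H \<subseteq> carrier G"
  shows "Wset G H p gs (ix @ [i]) = {w \<otimes> gs ! i [^] c | w c. w \<in> Wset G H p gs ix \<and> c \<in> {0..<p}}"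
proof -
  have gi: "gs ! i \<in> carrier G" using assms by auto
  have Sc: "\<And>a. Sm G gs ix a \<in> carrier G" using Sm_closed assms by blast
  show ?thesis
  proof (rule Set.set_eqI, rule iffI)
    fix x assume "x \<in> Wset G H p gs (ix @ [i])"
    then obtain h a where h: "h \<in> H" "\<forall>j<length ix + 1. a j \<in> {0..<p}" "x = h \<otimes> Sm G gs (ix @ [i]) a"
      unfolding Wset_def by auto
    have "x = (h \<otimes> Sm G gs ix a) \<otimes> gs ! i [^] a (length ix)"
      using h Sm_snoc[OF assms(1-3)] Sc gi assms(4) by (auto simp: m_assoc)
    moreover have "h \<otimes> Sm G gs ix a \<in> Wset G H p gs ix" using h unfolding Wset_def
      by (smt (verit, best) Suc_eq_plus1 less_Suc_eq mem_Collect_eq)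
    ultimately show "x \<in> {w \<otimes> gs ! i [^] c | w c. w \<in> Wset G H p gs ix \<and> c \<in> {0..<p}}"
      using h(2) by auto
  next
    fix x assume "x \<in> {w \<otimes> gs ! i [^] c | w c. w \<in> Wset G H p gs ix \<and> c \<in> {0..<p}}"
    then obtain h a c where h: "h \<in> H" "\<forall>j<length ix. a j \<in> {0..<p}" "c \<in> {0..<p}"
       "x = (h \<otimes> Sm G gs ix a) \<otimes> gs ! i [^] c"
      unfolding Wset_def by auto
    define a' where "a' = a(length ix := c)"
    have "Sm G gs ix a' = Sm G gs ix a" by (rule Sm_cong) (simp add: a'_def)
    then have "x = h \<otimes> Sm G gs (ix @ [i]) a'"
      using h Sm_snoc[OF assms(1-3)] Sc gi assms(4) by (auto simp: m_assoc a'_def)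
    moreover have "\<forall>j<length (ix @ [i]). a' j \<in> {0..<p}" using h by (auto simp: a'_def)
    ultimately show "x \<in> Wset G H p gs (ix @ [i])" using h(1) unfolding Wset_def by blast
  qed
qed

lemma pow_coprime_in:
  assumes "subgroup W G" "g \<in> carrier G" "g [^] (p::int) \<in> W" "g [^] (d::int) \<in> W" "prime p" "\<not> p dvd d"
  shows "g \<in> W"
proof -
  have "coprime d p" using prime_imp_coprime[OF assms(5,6)] by (simp add: ac_simps)
  then have "gcd d p = 1" by simp
  then obtain u v where uv: "u * d + v * p = 1" using bezout_int[of d p] by auto
  have "g = g [^] (u * d + v * p)" using uv assms(2) by (simp add: int_pow_1)
  also have "\<dots> = (g [^] d) [^] u \<otimes> (g [^] p) [^] v"
    using assms(2) by (simp only: int_pow_mult int_pow_pow mult.commute)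
  also have "\<dots> \<in> W" using assms(1,3,4) subgroup_int_pow_closed subgroup.m_closed by metis
  finally show ?thesis .
qed

lemma Tset_subgroup:
  assumes "subgroup W G" "g \<in> carrier G"
  shows "subgroup {w \<otimes> g [^] (c::int) | w c. w \<in> W} G"
proof (rule subgroupI)
  have Wc: "W \<subseteq> carrier G" using assms(1) subgroup.subset by blast
  show "{w \<otimes> g [^] (c::int) | w c. w \<in> W} \<subseteq> carrier G" using Wc assms(2) by auto
  show "{w \<otimes> g [^] (c::int) | w c. w \<in> W} \<noteq> {}" using assms(1) subgroup.one_closed by blast
  fix a assume "a \<in> {w \<otimes> g [^] (c::int) | w c. w \<in> W}"
  then obtain w c where wc: "w \<in> W" "a = w \<otimes> g [^] (c::int)" by blast
  have wcar: "w \<in> carrier G" using wc Wc by blast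
  have gc: "g [^] c \<in> carrier G" using assms(2) by simp
  have "inv a = inv (g [^] c) \<otimes> inv w" using wc(2) wcar gc by (simp add: inv_mult_group)
  also have "\<dots> = inv w \<otimes> inv (g [^] c)" using wcar gc by (intro m_comm) auto
  also have "\<dots> = inv w \<otimes> g [^] (- c)" using assms(2) by (simp only: int_pow_neg)
  finally have "inv a = inv w \<otimes> g [^] (- c)" .
  moreover have "inv w \<in> W" by (rule subgroup.m_inv_closed[OF assms(1) wc(1)])
  ultimately show "inv a \<in> {w \<otimes> g [^] (c::int) | w c. w \<in> W}" by blast
  fix b assume "b \<in> {w \<otimes> g [^] (c::int) | w c. w \<in> W}"
  then obtain w' c' where wc': "w' \<in> W" "b = w' \<otimes> g [^] (c'::int)" by blast
  have wcar': "w' \<in> carrier G" using wc' Wc by blast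
  have gc': "g [^] c' \<in> carrier G" using assms(2) by simp
  have "a \<otimes> b = (w \<otimes> w') \<otimes> (g [^] c \<otimes> g [^] c')"
    using wc(2) wc'(2) wcar wcar' gc gc' by (metis m_assoc m_comm m_closed)
  also have "\<dots> = (w \<otimes> w') \<otimes> g [^] (c + c')" using assms(2) by (simp add: int_pow_mult)
  finally have "a \<otimes> b = (w \<otimes> w') \<otimes> g [^] (c + c')" .
  moreover have "w \<otimes> w' \<in> W" by (rule subgroup.m_closed[OF assms(1) wc(1) wc'(1)])
  ultimately show "a \<otimes> b \<in> {w \<otimes> g [^] (c::int) | w c. w \<in> W}" by blast
qed

lemma Tset_eq:
  assumes "subgroup W G" "g \<in> carrier G" "g [^] p \<in> W" "p > (0::int)"
  shows "{w \<otimes> g [^] c | w c. w \<in> W \<and> c \<in> {0..<p}} = {w \<otimes> g [^] (c::int) | w c. w \<in> W}"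
proof (rule Set.set_eqI, rule iffI)
  have Wc: "W \<subseteq> carrier G" using assms(1) subgroup.subset by blast
  fix x
  show "x \<in> {w \<otimes> g [^] c | w c. w \<in> W \<and> c \<in> {0..<p}} \<Longrightarrow> x \<in> {w \<otimes> g [^] (c::int) | w c. w \<in> W}"
    by blast
  assume "x \<in> {w \<otimes> g [^] (c::int) | w c. w \<in> W}"
  then obtain w c where wc: "w \<in> W" "x = w \<otimes> g [^] (c::int)" by blast
  have "g [^] c = g [^] (p * (c div p) + c mod p)" by simp
  also have "\<dots> = (g [^] p) [^] (c div p) \<otimes> g [^] (c mod p)"
    using assms(2) by (simp only: int_pow_mult int_pow_pow)
  finally have "x = (w \<otimes> (g [^] p) [^] (c div p)) \<otimes> g [^] (c mod p)"
    using wc Wc assms(2,3) by (simp add: m_assoc subsetD)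
  moreover have "w \<otimes> (g [^] p) [^] (c div p) \<in> W"
    using wc(1) assms(1,3) subgroup_int_pow_closed subgroup.m_closed by metis
  moreover have "c mod p \<in> {0..<p}" using assms(4) by simp
  ultimately show "x \<in> {w \<otimes> g [^] c | w c. w \<in> W \<and> c \<in> {0..<p}}" by blast
qed

lemma extend:
  assumes sH: "subgroup H G" and sE: "subgroup E G" and HE: "H \<subseteq> E" and fE: "finite E"
    and pr: "prime p" and pw: "\<forall>x\<in>E. x [^] p \<in> H" and gsE: "set gs \<subseteq> E"
    and inv: "ChainInv G H E p gs ix" and i: "i < length gs" and gi: "gs ! i \<notin> Wset G H p gs ix"
  shows "ChainInv G H E p gs (ix @ [i])"
proof -
  define W where "W = Wset G H p gs ix"
  define g where "g = gs ! i"
  have p1: "p > 1" using pr prime_gt_1_int by blast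
  have Ec: "E \<subseteq> carrier G" using sE subgroup.subset by blast
  have gsc: "set gs \<subseteq> carrier G" using gsE Ec by blast
  have Hc: "H \<subseteq> carrier G" using sH subgroup.subset by blast
  have gE: "g \<in> E" using gsE i g_def by auto
  have gc: "g \<in> carrier G" using gE Ec by blast
  have sW: "subgroup W G" and HW: "H \<subseteq> W" and WE: "W \<subseteq> E" and ixl: "set ix \<subseteq> {..<length gs}"
    and cW: "card W = nat p ^ length ix * card H" and old: "\<forall>j\<in>set ix. gs ! j \<notin> H \<and> gs ! j \<in> W"
    and dix: "distinct ix"
    using inv unfolding ChainInv_def W_def by auto
  have Wc: "W \<subseteq> carrier G" using sW subgroup.subset by blast
  have fW: "finite W" using WE fE finite_subset by blast
  have gp: "g [^] p \<in> W" using pw gE HW by blast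
  have gW: "g \<notin> W" using gi W_def g_def by simp
  have W'1: "Wset G H p gs (ix @ [i]) = {w \<otimes> g [^] c | w c. w \<in> W \<and> c \<in> {0..<p}}"
    unfolding W_def g_def by (rule Wset_snoc[OF gsc ixl i Hc])
  have W'2: "Wset G H p gs (ix @ [i]) = {w \<otimes> g [^] (c::int) | w c. w \<in> W}"
    unfolding W'1 using Tset_eq[OF sW gc gp] p1 by simp
  have sW': "subgroup (Wset G H p gs (ix @ [i])) G" unfolding W'2 by (rule Tset_subgroup[OF sW gc])
  have WW': "W \<subseteq> Wset G H p gs (ix @ [i])"
  proof
    fix w assume "w \<in> W"
    then have "w = w \<otimes> g [^] (0::int)" using Wc by auto
    then show "w \<in> Wset G H p gs (ix @ [i])" unfolding W'2 using \<open>w \<in> W\<close> by blast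
  qed
  have gW': "g \<in> Wset G H p gs (ix @ [i])"
  proof -
    have "g = \<one> \<otimes> g [^] (1::int)" using gc by simp
    then show ?thesis unfolding W'2 using subgroup.one_closed[OF sW] by blast
  qed
  have W'E: "Wset G H p gs (ix @ [i]) \<subseteq> E"
  proof
    fix x assume "x \<in> Wset G H p gs (ix @ [i])"
    then obtain w c where "w \<in> W" "x = w \<otimes> g [^] (c::int)" unfolding W'2 by blast
    then show "x \<in> E" using WE gE sE subgroup_int_pow_closed subgroup.m_closed by (metis subsetD)
  qed
  have iix: "i \<notin> set ix" using old gW g_def by auto
  have card': "card (Wset G H p gs (ix @ [i])) = nat p * card W"
  proof -
    have U: "Wset G H p gs (ix @ [i]) = (\<Union>c\<in>{0..<p}. (\<lambda>w. w \<otimes> g [^] c) ` W)"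
      unfolding W'1 by blast
    have disj: "(\<lambda>w. w \<otimes> g [^] c) ` W \<inter> (\<lambda>w. w \<otimes> g [^] c') ` W = {}"
      if c: "c \<in> {0..<p}" "c' \<in> {0..<p}" "c \<noteq> c'" for c c'
    proof (rule ccontr)
      assume "(\<lambda>w. w \<otimes> g [^] c) ` W \<inter> (\<lambda>w. w \<otimes> g [^] c') ` W \<noteq> {}"
      then obtain w w' where ww: "w \<in> W" "w' \<in> W" "w \<otimes> g [^] c = w' \<otimes> g [^] c'" by blast
      have wc: "w \<in> carrier G" "w' \<in> carrier G" using ww Wc by auto
      have "g [^] (c - c') = g [^] c \<otimes> inv (g [^] c')" using gc by (simp add: int_pow_diff)
      also have "\<dots> = inv w \<otimes> w'"
      proof -
        have "inv w \<otimes> (w \<otimes> g [^] c) \<otimes> inv (g [^] c') = inv w \<otimes> (w' \<otimes> g [^] c') \<otimes> inv (g [^] c')"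
          using ww(3) by simp
        moreover have "inv w \<otimes> (w \<otimes> g [^] c) \<otimes> inv (g [^] c') = g [^] c \<otimes> inv (g [^] c')"
          using wc gc by (simp add: m_assoc[symmetric])
        moreover have "inv w \<otimes> (w' \<otimes> g [^] c') \<otimes> inv (g [^] c') = inv w \<otimes> w'"
          using wc gc by (simp add: m_assoc)
        ultimately show ?thesis by simp
      qed
      finally have "g [^] (c - c') \<in> W" using ww sW subgroup.m_closed subgroup.m_inv_closed by metis
      moreover have "\<not> p dvd (c - c')"
      proof
        assume "p dvd (c - c')"
        then obtain k where k: "c - c' = p * k" by blast
        have "p * k < p" "- p < p * k" using c k by (simp_all add: k[symmetric])
        then have h1: "p * k < p * 1" and h2: "p * (-1) < p * k" by auto
        have "k < 1" "-1 < k" using mult_less_cancel_left[of p k 1] mult_less_cancel_left[of p "-1" k] h1 h2 p1 by auto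
        then have "k = 0" by simp
        then show False using k c by simp
      qed
      ultimately have "g \<in> W" using pow_coprime_in[OF sW gc gp _ pr] by blast
      then show False using gW by simp
    qed
    have inj: "inj_on (\<lambda>w. w \<otimes> g [^] c) W" for c :: int
    proof (rule inj_onI)
      fix x y assume "x \<in> W" "y \<in> W" "x \<otimes> g [^] c = y \<otimes> g [^] c"
      then show "x = y" using Wc gc by (metis int_pow_closed right_cancel subsetD)
    qed
    have "card (\<Union>c\<in>{0..<p}. (\<lambda>w. w \<otimes> g [^] c) ` W) = (\<Sum>c\<in>{0..<p}. card ((\<lambda>w. w \<otimes> g [^] c) ` W))"
      using fW disj by (intro card_UN_disjoint) auto
    also have "\<dots> = (\<Sum>c\<in>{0..<p}. card W)" using inj by (simp add: card_image)
    also have "\<dots> = nat p * card W" by simp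
    finally show ?thesis using U by simp
  qed
  show ?thesis unfolding ChainInv_def
    using dix iix ixl i old WW' gW' HW WE W'E sW' card' cW gW
    by (auto simp: g_def W_def)
qed

lemma chain_exists:
  assumes sH: "subgroup H G" and sE: "subgroup E G" and HE: "H \<subseteq> E" and fE: "finite E"
    and pr: "prime p" and pw: "\<forall>x\<in>E. x [^] p \<in> H" and gsE: "set gs \<subseteq> E"
    and gen: "\<forall>S. subgroup S G \<longrightarrow> H \<subseteq> S \<longrightarrow> set gs \<subseteq> S \<longrightarrow> E \<subseteq> S"
  shows "\<exists>ix. ChainInv G H E p gs ix \<and> Wset G H p gs ix = E"
proof -
  have p1: "p > 1" using pr prime_gt_1_int by blast
  have Hc: "H \<subseteq> carrier G" using sH subgroup.subset by blast
  have fH: "finite H" using HE fE finite_subset by blast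
  have "H \<noteq> {}" using subgroup.one_closed[OF sH] by blast
  then have cH: "card H \<ge> 1" using fH by (simp add: Suc_le_eq card_gt_0_iff)
  have inv0: "ChainInv G H E p gs []"
    unfolding ChainInv_def Wset_Nil[OF Hc] using sH HE by auto
  have bound: "length ix < card E" if "ChainInv G H E p gs ix" for ix
  proof -
    have "card (Wset G H p gs ix) \<le> card E" using that fE unfolding ChainInv_def by (meson card_mono)
    then have "nat p ^ length ix * card H \<le> card E" using that unfolding ChainInv_def by simp
    moreover have "nat p ^ length ix \<le> nat p ^ length ix * card H" using cH by simp
    moreover have "length ix < 2 ^ length ix" by (rule less_exp)
    moreover have "(2::nat) ^ length ix \<le> nat p ^ length ix" using p1 by (intro power_mono) auto
    ultimately show ?thesis by linarith
  qed
  define L where "L = {n. \<exists>ix. ChainInv G H E p gs ix \<and> length ix = n}"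
  have "L \<subseteq> {..<card E}" using bound unfolding L_def by blast
  then have fL: "finite L" using finite_subset by blast
  have L0: "0 \<in> L" using inv0 unfolding L_def by auto
  define m where "m = Max L"
  have "m \<in> L" unfolding m_def using fL L0 Max_in by blast
  then obtain ix where ix: "ChainInv G H E p gs ix" "length ix = m" unfolding L_def by blast
  have all: "set gs \<subseteq> Wset G H p gs ix"
  proof
    fix x assume "x \<in> set gs"
    then obtain i where i: "i < length gs" "x = gs ! i" by (auto simp: in_set_conv_nth)
    show "x \<in> Wset G H p gs ix"
    proof (rule ccontr)
      assume "x \<notin> Wset G H p gs ix"
      then have "ChainInv G H E p gs (ix @ [i])" using extend[OF sH sE HE fE pr pw gsE ix(1) i(1)] i by simp
      then have "Suc m \<in> L" using ix unfolding L_def by force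
      then have "Suc m \<le> m" using fL unfolding m_def by (simp add: Max_ge)
      then show False by simp
    qed
  qed
  have "E \<subseteq> Wset G H p gs ix" using gen ix(1) all unfolding ChainInv_def by blast
  moreover have "Wset G H p gs ix \<subseteq> E" using ix(1) unfolding ChainInv_def by blast
  ultimately show ?thesis using ix by blast
qed

end


lemma set_sub_iff: "set xs \<subseteq> A \<longleftrightarrow> (\<forall>i<length xs. xs ! i \<in> A)"
  by (auto simp: in_set_conv_nth) (use nth_mem in blast)

lemma vadd_length [simp]: "length (vadd m xs ys) = min (length xs) (length ys)"
  by (simp add: vadd_def)

lemma vadd_nth [simp]: "i < length xs \<Longrightarrow> i < length ys \<Longrightarrow> vadd m xs ys ! i = (xs ! i + ys ! i) mod m"
  by (simp add: vadd_def)

lemma vsmul_length [simp]: "length (vsmul m c xs) = length xs"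
  by (simp add: vsmul_def)

lemma vsmul_nth [simp]: "i < length xs \<Longrightarrow> vsmul m c xs ! i = (c * xs ! i) mod m"
  by (simp add: vsmul_def)

lemma vadd_comm: "vadd m xs ys = vadd m ys xs"
  by (rule nth_equalityI) (auto simp: add.commute)

lemma vadd_assoc: "vadd m (vadd m xs ys) zs = vadd m xs (vadd m ys zs)"
  by (rule nth_equalityI) (auto simp: mod_add_left_eq mod_add_right_eq add.assoc)

lemma vadd_append: "length xs = length ys \<Longrightarrow> vadd m (xs @ xs') (ys @ ys') = vadd m xs ys @ vadd m xs' ys'"
  by (simp add: vadd_def)

definition VG :: "int \<Rightarrow> nat \<Rightarrow> int list monoid" where
  "VG p n = \<lparr>carrier = {x. length x = n \<and> set x \<subseteq> {0..<p}}, mult = vadd p, one = replicate n 0\<rparr>"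

lemma VG_simps [simp]: "carrier (VG p n) = {x. length x = n \<and> set x \<subseteq> {0..<p}}"
  "mult (VG p n) = vadd p" "one (VG p n) = replicate n 0"
  by (simp_all add: VG_def)

lemma vadd_closed: "p > 0 \<Longrightarrow> length x = n \<Longrightarrow> length y = n \<Longrightarrow> set (vadd p x y) \<subseteq> {0..<p}"
  by (auto simp: set_sub_iff)

lemma vadd_zero: "length x = n \<Longrightarrow> set x \<subseteq> {0..<p} \<Longrightarrow> vadd p (replicate n 0) x = x"
  by (rule nth_equalityI) (auto simp: set_sub_iff)

lemma vadd_zero_r: "length x = n \<Longrightarrow> set x \<subseteq> {0..<p} \<Longrightarrow> vadd p x (replicate n 0) = x"
  using vadd_zero vadd_comm by metis

lemma VG_comm_group: "p > 0 \<Longrightarrow> comm_group (VG p n)"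
proof (rule comm_groupI, goal_cases)
  case (1 x y)
  then show ?case by (simp add: vadd_closed)
next
  case 2
  then show ?case by (simp add: set_replicate_conv_if)
next
  case (3 x y z)
  then show ?case by (simp add: vadd_assoc)
next
  case (4 x y)
  then show ?case by (simp add: vadd_comm)
next
  case (5 x)
  then show ?case by (simp add: vadd_zero)
next
  case (6 x)
  have "vsmul p (-1) x \<in> carrier (VG p n)" using 6 by (auto simp: set_sub_iff)
  moreover have "vadd p (vsmul p (-1) x) x = replicate n 0"
  proof (rule nth_equalityI)
    show "length (vadd p (vsmul p (-1) x) x) = length (replicate n 0)" using 6 by simp
    fix i assume "i < length (vadd p (vsmul p (-1) x) x)"
    then have i: "i < length x" by simp
    have "((-1 * x ! i) mod p + x ! i) mod p = 0" by (simp add: mod_add_left_eq)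
    then show "vadd p (vsmul p (-1) x) x ! i = replicate n 0 ! i" using i 6 by simp
  qed
  ultimately show ?case by (intro bexI[of _ "vsmul p (-1) x"]) simp_all
qed

lemma VG_pow: "p > 0 \<Longrightarrow> x \<in> carrier (VG p n) \<Longrightarrow> x [^]\<^bsub>VG p n\<^esub> (k::nat) = vsmul p (int k) x"
proof (induction k)
  case 0
  then show ?case by (intro nth_equalityI) auto
next
  case (Suc k)
  then show ?case
    by (intro nth_equalityI) (auto simp: mod_add_left_eq distrib_right add.commute mod_add_right_eq)
qed

lemma vinv: "length x = n \<Longrightarrow> vadd p (vsmul p (-1) x) x = replicate n 0"
proof (rule nth_equalityI)
  assume l: "length x = n"
  show "length (vadd p (vsmul p (-1) x) x) = length (replicate n 0)" using l by simp
  fix i assume "i < length (vadd p (vsmul p (-1) x) x)"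
  then have i: "i < length x" by simp
  have "((-1 * x ! i) mod p + x ! i) mod p = 0" by (simp add: mod_add_left_eq)
  then show "vadd p (vsmul p (-1) x) x ! i = replicate n 0 ! i" using i l by simp
qed

lemma vsmul_closed: "p > 0 \<Longrightarrow> set (vsmul p c x) \<subseteq> {0..<p}"
  by (auto simp: set_sub_iff)

lemma zero_closed: "p > 0 \<Longrightarrow> set (replicate n (0::int)) \<subseteq> {0..<p}"
  by (simp add: set_replicate_conv_if)

definition MG :: "int \<Rightarrow> nat \<Rightarrow> nat \<Rightarrow> (int list \<times> int list) monoid" where
  "MG p \<alpha> \<beta> = \<lparr>carrier = {u. is_mixed p \<alpha> \<beta> u}, mult = madd p, one = mzero \<alpha> \<beta>\<rparr>"

lemma MG_simps [simp]: "carrier (MG p \<alpha> \<beta>) = {u. is_mixed p \<alpha> \<beta> u}"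
  "mult (MG p \<alpha> \<beta>) = madd p" "one (MG p \<alpha> \<beta>) = mzero \<alpha> \<beta>"
  by (simp_all add: MG_def)

lemma madd_closed: "p > 0 \<Longrightarrow> is_mixed p \<alpha> \<beta> u \<Longrightarrow> is_mixed p \<alpha> \<beta> v \<Longrightarrow> is_mixed p \<alpha> \<beta> (madd p u v)"
  unfolding is_mixed_def madd_def by (simp add: vadd_closed)

lemma msmul_closed: "p > 0 \<Longrightarrow> is_mixed p \<alpha> \<beta> u \<Longrightarrow> is_mixed p \<alpha> \<beta> (msmul p c u)"
  unfolding is_mixed_def msmul_def by (simp add: vsmul_closed)

lemma mzero_mixed: "p > 0 \<Longrightarrow> is_mixed p \<alpha> \<beta> (mzero \<alpha> \<beta>)"
  unfolding is_mixed_def mzero_def by (simp add: zero_closed)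

lemma madd_assoc: "madd p (madd p u v) w = madd p u (madd p v w)"
  unfolding madd_def by (simp add: vadd_assoc)

lemma madd_comm: "madd p u v = madd p v u"
  unfolding madd_def by (metis vadd_comm)

lemma madd_zero: "is_mixed p \<alpha> \<beta> u \<Longrightarrow> madd p (mzero \<alpha> \<beta>) u = u"
  unfolding madd_def mzero_def is_mixed_def by (simp add: vadd_zero)

lemma madd_zero_r: "is_mixed p \<alpha> \<beta> u \<Longrightarrow> madd p u (mzero \<alpha> \<beta>) = u"
  using madd_zero madd_comm by metis

lemma minv: "is_mixed p \<alpha> \<beta> u \<Longrightarrow> madd p (msmul p (-1) u) u = mzero \<alpha> \<beta>"
  unfolding madd_def mzero_def is_mixed_def msmul_def by (simp add: vinv)

lemma MG_comm_group: "p > 0 \<Longrightarrow> comm_group (MG p \<alpha> \<beta>)"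
proof (rule comm_groupI, goal_cases)
  case (1 x y)
  then show ?case by (simp add: madd_closed)
next
  case 2
  then show ?case by (simp add: mzero_mixed)
next
  case (3 x y z)
  then show ?case by (simp add: madd_assoc)
next
  case (4 x y)
  then show ?case by (simp add: madd_comm)
next
  case (5 x)
  then show ?case by (simp add: madd_zero)
next
  case (6 x)
  then show ?case using minv[of p \<alpha> \<beta> x] msmul_closed[of p \<alpha> \<beta> x "-1"]
    by (intro bexI[of _ "msmul p (-1) x"]) simp_all
qed

lemma MG_pow: "p > 0 \<Longrightarrow> u \<in> carrier (MG p \<alpha> \<beta>) \<Longrightarrow> u [^]\<^bsub>MG p \<alpha> \<beta>\<^esub> (k::nat) = msmul p (int k) u"
proof (induction k)
  case 0
  then show ?case by (auto simp: msmul_def mzero_def is_mixed_def prod_eq_iff intro!: nth_equalityI)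
next
  case (Suc k)
  then show ?case
    by (auto simp: msmul_def madd_def is_mixed_def prod_eq_iff mod_add_left_eq distrib_right add.commute mod_add_right_eq
        intro!: nth_equalityI)
qed

lemma MG_inv: "p > 0 \<Longrightarrow> u \<in> carrier (MG p \<alpha> \<beta>) \<Longrightarrow> inv\<^bsub>MG p \<alpha> \<beta>\<^esub> u = msmul p (-1) u"
  using comm_group.axioms(2)[OF MG_comm_group] group.inv_equality minv msmul_closed
  by (metis MG_simps mem_Collect_eq)

lemma phi_length [simp]: "length (phi p t) = nat p"
  by (simp add: phi_def)

lemma phi_nth: "j < nat p \<Longrightarrow> phi p t ! j = (t div p + t mod p * int j) mod p"
  by (simp add: phi_def)

lemma phi_range: "p > 0 \<Longrightarrow> set (phi p t) \<subseteq> {0..<p}"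
  by (auto simp: phi_def)

lemma phi_eqI: "(\<And>j. j < nat p \<Longrightarrow> phi p a ! j = phi p b ! j) \<Longrightarrow> phi p a = phi p b"
  by (rule nth_equalityI) auto

lemma phi_eqI2: "length ys = nat p \<Longrightarrow> (\<And>j. j < nat p \<Longrightarrow> phi p a ! j = ys ! j) \<Longrightarrow> phi p a = ys"
  by (rule nth_equalityI) auto

lemma mod_sq_div: "p > 0 \<Longrightarrow> (t mod p^2) div p = t div p mod (p::int)"
proof -
  assume p: "p > 0"
  have "t mod (p * p) = p * (t div p mod p) + t mod p" using p by (simp add: zmod_zmult2_eq)
  then show ?thesis using p by (simp add: power2_eq_square)
qed

lemma mod_sq_mod: "p > 0 \<Longrightarrow> (t mod p^2) mod p = t mod (p::int)"
  by (simp add: mod_mod_cancel)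

lemma phi_mod: "p > 0 \<Longrightarrow> phi p (t mod p^2) = phi p t"
  by (rule phi_eqI) (simp add: phi_nth mod_sq_div mod_sq_mod mod_add_left_eq)

lemma phi_addp: "p > 0 \<Longrightarrow> phi p (t + p * s) = vadd p (phi p t) (phi p (p * s))"
proof (rule phi_eqI2)
  show "length (vadd p (phi p t) (phi p (p * s))) = nat p" by simp
  fix j assume p: "p > 0" and j: "j < nat p"
  have "(t + p * s) div p = t div p + s" using p by simp
  moreover have "(t + p * s) mod p = t mod p" by simp
  ultimately have "phi p (t + p * s) ! j = (t div p + s + t mod p * int j) mod p" using j by (simp add: phi_nth add_ac)
  also have "\<dots> = ((t div p + t mod p * int j) mod p + s mod p) mod p"
    by (simp only: mod_add_eq) (simp add: add_ac)
  also have "\<dots> = vadd p (phi p t) (phi p (p * s)) ! j" using j p by (simp add: phi_nth)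
  finally show "phi p (t + p * s) ! j = vadd p (phi p t) (phi p (p * s)) ! j" .
qed

lemma phi_add: "p > 0 \<Longrightarrow> vadd p (phi p a) (phi p b) = phi p (a + b - p * ((a mod p + b mod p) div p))"
proof (rule sym, rule phi_eqI2)
  show "length (vadd p (phi p a) (phi p b)) = nat p" by simp
  fix j assume p: "p > 0" and j: "j < nat p"
  define c where "c = (a mod p + b mod p) div p"
  define r where "r = (a mod p + b mod p) mod p"
  have ab: "a + b - p * c = p * (a div p + b div p) + r"
  proof -
    have 1: "a mod p + b mod p = p * c + r" unfolding c_def r_def by simp
    have 2: "a = p * (a div p) + a mod p" "b = p * (b div p) + b mod p" by simp_all
    have "a + b - p * c = p * (a div p) + p * (b div p) + r" using 1 2 by linarith
    then show ?thesis by (simp add: distrib_left)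
  qed
  have r: "0 \<le> r" "r < p" using p unfolding r_def by simp_all
  have d: "(a + b - p * c) div p = a div p + b div p" unfolding ab using r p by simp
  have m: "(a + b - p * c) mod p = r" unfolding ab using r p by simp
  have "phi p (a + b - p * c) ! j = (a div p + b div p + r * int j) mod p"
    using j by (simp add: phi_nth d m)
  also have "\<dots> = (a div p + b div p + (a mod p + b mod p) * int j) mod p"
    unfolding r_def by (metis mod_add_right_eq mod_mult_left_eq)
  also have "\<dots> = ((a div p + a mod p * int j) + (b div p + b mod p * int j)) mod p"
    by (simp add: algebra_simps)
  also have "\<dots> = ((a div p + a mod p * int j) mod p + (b div p + b mod p * int j) mod p) mod p"
    by (simp add: mod_add_eq)
  also have "\<dots> = vadd p (phi p a) (phi p b) ! j" using j p by (simp add: phi_nth)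
  finally show "phi p (a + b - p * ((a mod p + b mod p) div p)) ! j = vadd p (phi p a) (phi p b) ! j"
    unfolding c_def .
qed

lemma div_lt_sq: "p > 0 \<Longrightarrow> 0 \<le> a \<Longrightarrow> a < p^2 \<Longrightarrow> a div p < (p::int)"
proof (rule ccontr)
  assume p: "p > 0" and a: "0 \<le> a" "a < p^2" and "\<not> a div p < p"
  then have "p \<le> a div p" by simp
  then have "p * p \<le> p * (a div p)" using p by simp
  also have "\<dots> \<le> a"
  proof -
    have "a = p * (a div p) + a mod p" by simp
    moreover have "a mod p \<ge> 0" using p by simp
    ultimately show ?thesis by linarith
  qed
  finally show False using a by (simp add: power2_eq_square)
qed

lemma phi_inj: "p > 1 \<Longrightarrow> a \<in> {0..<p^2} \<Longrightarrow> b \<in> {0..<p^2} \<Longrightarrow> phi p a = phi p b \<Longrightarrow> a = b"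
proof -
  assume p: "p > 1" and a: "a \<in> {0..<p^2}" and b: "b \<in> {0..<p^2}" and e: "phi p a = phi p b"
  have n0: "0 < nat p" and n1: "1 < nat p" using p by auto
  have "phi p a ! 0 = phi p b ! 0" using e by simp
  then have "(a div p) mod p = (b div p) mod p" using n0 by (simp add: phi_nth)
  moreover have "a div p < p" "b div p < p" using a b p div_lt_sq by auto
  moreover have "0 \<le> a div p" "0 \<le> b div p" using a b p by (auto simp: pos_imp_zdiv_nonneg_iff)
  ultimately have d: "a div p = b div p" by simp
  have "phi p a ! 1 = phi p b ! 1" using e by simp
  then have "(a div p + a mod p) mod p = (b div p + b mod p) mod p" using n1 by (simp add: phi_nth)
  then have e2: "(a div p + a mod p) mod p = (a div p + b mod p) mod p" using d by simp
  have "a mod p = ((a div p + a mod p) mod p - a div p) mod p" by (simp add: mod_diff_left_eq)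
  also have "\<dots> = ((a div p + b mod p) mod p - a div p) mod p" using e2 by simp
  also have "\<dots> = b mod p" by (simp add: mod_diff_left_eq)
  finally have "a mod p = b mod p" .
  then show "a = b" using d by (metis mult_div_mod_eq)
qed

lemma length_concat_const: "(\<And>x. length (f x) = k) \<Longrightarrow> length (concat (map f xs)) = length xs * k"
  by (induction xs) auto

lemma concat_vadd:
  assumes "length xs = length ys"
    and "\<forall>i<length xs. phi p (h (xs ! i) (ys ! i)) = vadd p (phi p (xs ! i)) (phi p (ys ! i))"
  shows "concat (map (phi p) (map2 h xs ys)) = vadd p (concat (map (phi p) xs)) (concat (map (phi p) ys))"
  using assms
proof (induction xs ys rule: list_induct2)
  case Nil
  then show ?case by (simp add: vadd_def)
next
  case (Cons x xs y ys)
  have "phi p (h x y) = vadd p (phi p x) (phi p y)" using Cons.prems by force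
  moreover have "concat (map (phi p) (map2 h xs ys)) = vadd p (concat (map (phi p) xs)) (concat (map (phi p) ys))"
    using Cons.prems by (intro Cons.IH) force
  ultimately show ?case by (simp add: vadd_append)
qed

lemma concat_inj:
  assumes "length xs = length ys" "\<And>x. length (f x) = k" "concat (map f xs) = concat (map f ys)"
  shows "map f xs = map f ys"
  using assms(1,3)
proof (induction xs ys rule: list_induct2)
  case Nil
  then show ?case by simp
next
  case (Cons x xs y ys)
  then show ?case using assms(2) by (auto simp: append_eq_append_conv)
qed

lemma Phi_length: "is_mixed p \<alpha> \<beta> u \<Longrightarrow> length (Phi p u) = \<alpha> + nat p * \<beta>"
  unfolding Phi_def is_mixed_def by (simp add: length_concat_const[where k="nat p"])

lemma Phi_range: "p > 0 \<Longrightarrow> is_mixed p \<alpha> \<beta> u \<Longrightarrow> set (Phi p u) \<subseteq> {0..<p}"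
  unfolding Phi_def is_mixed_def using phi_range by fastforce

lemma Phi_VG: "p > 0 \<Longrightarrow> is_mixed p \<alpha> \<beta> u \<Longrightarrow> Phi p u \<in> carrier (VG p (\<alpha> + nat p * \<beta>))"
  using Phi_length Phi_range by simp

lemma Phi_inj:
  assumes p: "p > 1" and u: "is_mixed p \<alpha> \<beta> u" and v: "is_mixed p \<alpha> \<beta> v" and e: "Phi p u = Phi p v"
  shows "u = v"
proof -
  have l: "length (fst u) = length (fst v)" "length (snd u) = length (snd v)" using u v by (simp_all add: is_mixed_def)
  have 1: "fst u = fst v" and 2: "concat (map (phi p) (snd u)) = concat (map (phi p) (snd v))"
    using e l(1) unfolding Phi_def by (simp_all add: append_eq_append_conv)
  have m: "map (phi p) (snd u) = map (phi p) (snd v)" using concat_inj[OF l(2) phi_length 2] .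
  have "snd u = snd v"
  proof (rule nth_equalityI)
    show "length (snd u) = length (snd v)" by (fact l(2))
    fix i assume i: "i < length (snd u)"
    have "phi p (snd u ! i) = phi p (snd v ! i)" using m i l(2) by (metis nth_map)
    moreover have "snd u ! i \<in> {0..<p^2}" "snd v ! i \<in> {0..<p^2}" using u v i l(2)
      unfolding is_mixed_def by (auto simp: set_sub_iff)
    ultimately show "snd u ! i = snd v ! i" using phi_inj p by blast
  qed
  then show ?thesis using 1 by (simp add: prod_eq_iff)
qed

lemma phi_zero: "phi p 0 = replicate (nat p) 0"
  by (rule nth_equalityI) (simp_all add: phi_nth)

lemma concat_rep: "concat (replicate n (replicate k (0::int))) = replicate (n * k) 0"
  by (induction n) (simp_all add: replicate_add)

lemma Phi_zero: "Phi p (mzero \<alpha> \<beta>) = replicate (\<alpha> + nat p * \<beta>) 0"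
  unfolding Phi_def mzero_def by (simp add: phi_zero concat_rep replicate_add mult.commute)

lemma Phi_addQ:
  assumes p: "p > 0" and x: "is_mixed p \<alpha> \<beta> x" and z: "is_mixed p \<alpha> \<beta> z" and d: "\<forall>e\<in>set (snd z). p dvd e"
  shows "Phi p (madd p x z) = vadd p (Phi p x) (Phi p z)"
proof -
  have l: "length (fst x) = length (fst z)" "length (snd x) = length (snd z)"
    using x z by (simp_all add: is_mixed_def)
  have "concat (map (phi p) (map2 (\<lambda>a b. (a + b) mod p^2) (snd x) (snd z)))
      = vadd p (concat (map (phi p) (snd x))) (concat (map (phi p) (snd z)))"
  proof (rule concat_vadd[OF l(2)], intro allI impI)
    fix i assume i: "i < length (snd x)"
    have "p dvd snd z ! i" using d i l(2) by auto
    then obtain s where s: "snd z ! i = p * s" by blast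
    show "phi p ((snd x ! i + snd z ! i) mod p^2) = vadd p (phi p (snd x ! i)) (phi p (snd z ! i))"
      using p by (simp add: s phi_mod phi_addp)
  qed
  then show ?thesis unfolding Phi_def madd_def
    by (simp add: vadd_append l(1) length_concat_const[where k="nat p"]) (simp add: vadd_def)
qed

lemma Phi_add:
  assumes p: "p > 0" and x: "is_mixed p \<alpha> \<beta> x" and y: "is_mixed p \<alpha> \<beta> y"
  shows "\<exists>z. is_mixed p \<alpha> \<beta> z \<and> (\<forall>e\<in>set (snd z). p dvd e) \<and>
     vadd p (Phi p x) (Phi p y) = Phi p (madd p (madd p x y) z)"
proof -
  define cc where "cc = (\<lambda>a b. (a mod p + b mod p) div p)"
  define z where "z = (replicate \<alpha> (0::int), map2 (\<lambda>a b. (- p * cc a b) mod p^2) (snd x) (snd y))"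
  have l: "length (fst x) = \<alpha>" "length (fst y) = \<alpha>" "length (snd x) = \<beta>" "length (snd y) = \<beta>"
    using x y by (simp_all add: is_mixed_def)
  have zm: "is_mixed p \<alpha> \<beta> z" unfolding z_def is_mixed_def using p l
    by (auto simp: set_sub_iff zero_closed)
  have zd: "\<forall>e\<in>set (snd z). p dvd e"
  proof
    fix e assume "e \<in> set (snd z)"
    then obtain i where i: "i < \<beta>" "e = (- p * cc (snd x ! i) (snd y ! i)) mod p^2"
      unfolding z_def using l by (auto simp: in_set_conv_nth)
    show "p dvd e" unfolding i(2) by (rule dvd_mod) (simp_all add: power2_eq_square)
  qed
  have s2: "vadd (p^2) (vadd (p^2) (snd x) (snd y)) (snd z) = map2 (\<lambda>a b. (a + b - p * cc a b) mod p^2) (snd x) (snd y)"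
  proof (rule nth_equalityI)
    show "length (vadd (p^2) (vadd (p^2) (snd x) (snd y)) (snd z)) = length (map2 (\<lambda>a b. (a + b - p * cc a b) mod p^2) (snd x) (snd y))"
      by (simp add: z_def l)
    fix i assume "i < length (vadd (p^2) (vadd (p^2) (snd x) (snd y)) (snd z))"
    then have i: "i < \<beta>" by (simp add: z_def l)
    have "((snd x ! i + snd y ! i) mod p^2 + (- p * cc (snd x ! i) (snd y ! i)) mod p^2) mod p^2
        = (snd x ! i + snd y ! i + - p * cc (snd x ! i) (snd y ! i)) mod p^2"
      by (simp only: mod_add_eq)
    then show "vadd (p^2) (vadd (p^2) (snd x) (snd y)) (snd z) ! i = map2 (\<lambda>a b. (a + b - p * cc a b) mod p^2) (snd x) (snd y) ! i"
      using i by (simp add: z_def l)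
  qed
  have c2: "concat (map (phi p) (map2 (\<lambda>a b. (a + b - p * cc a b) mod p^2) (snd x) (snd y)))
      = vadd p (concat (map (phi p) (snd x))) (concat (map (phi p) (snd y)))"
    by (rule concat_vadd) (simp_all add: l p phi_mod phi_add cc_def)
  have f1: "vadd p (vadd p (fst x) (fst y)) (fst z) = vadd p (fst x) (fst y)"
    unfolding z_def using vadd_zero_r[of "vadd p (fst x) (fst y)" \<alpha> p] l p vadd_closed by simp
  have "Phi p (madd p (madd p x y) z) = vadd p (Phi p x) (Phi p y)"
    unfolding Phi_def madd_def using f1 s2 c2
    by (simp add: vadd_append l length_concat_const[where k="nat p"])
  then show ?thesis using zm zd by metis
qed

lemma card_Cs: "p > 0 \<Longrightarrow> card {cs. length cs = d \<and> set cs \<subseteq> {0..<p}} = nat p ^ d"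
proof -
  have "{cs. length cs = d \<and> set cs \<subseteq> {0..<p}} = {xs. set xs \<subseteq> {0..<p} \<and> length xs = d}" by blast
  then show "p > 0 \<Longrightarrow> ?thesis" using card_lists_length_eq[of "{0..<p}" d] by simp
qed

lemma finite_Cs: "finite {cs. length cs = d \<and> set cs \<subseteq> {0..<(p::int)}}"
proof -
  have "{cs. length cs = d \<and> set cs \<subseteq> {0..<p}} = {xs. set xs \<subseteq> {0..<p} \<and> length xs = d}" by blast
  then show ?thesis using finite_lists_length_eq[of "{0..<p}" d] by simp
qed

lemma finite_VG: "finite (carrier (VG p n))"
  using finite_Cs[of n p] by (simp add: conj_commute)

lemma map2_map_same: "map2 f (map g xs) (map h xs) = map (\<lambda>x. f (g x) (h x)) xs"
  by (induction xs) auto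

lemma VG_vsmul_pow: "p > 0 \<Longrightarrow> x \<in> carrier (VG p n) \<Longrightarrow> c \<ge> 0 \<Longrightarrow> vsmul p c x = x [^]\<^bsub>VG p n\<^esub> c"
  using VG_pow[of p x n "nat c"] pow_nat[of c "VG p n" x] by simp

lemma lincomb_in:
  assumes p: "p > 0" and sK: "subgroup K (VG p n)" and B: "set B \<subseteq> K" and cs: "set cs \<subseteq> {0..<p}"
  shows "lincomb p n cs B \<in> K"
proof -
  interpret V: comm_group "VG p n" using VG_comm_group p .
  have Kc: "K \<subseteq> carrier (VG p n)" using sK subgroup.subset by blast
  have "set (map2 (vsmul p) cs B) \<subseteq> K"
  proof
    fix y assume "y \<in> set (map2 (vsmul p) cs B)"
    then obtain c b where cb: "(c, b) \<in> set (zip cs B)" "y = vsmul p c b" by auto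
    have "c \<in> {0..<p}" "b \<in> K" using cb(1) cs B by (auto dest: set_zip_leftD set_zip_rightD)
    then have "y = b [^]\<^bsub>VG p n\<^esub> c" using cb(2) VG_vsmul_pow[OF p] Kc by auto
    then show "y \<in> K" using V.subgroup_int_pow_closed[OF sK \<open>b \<in> K\<close>] by simp
  qed
  then have "foldr (\<lambda>x y. x \<otimes>\<^bsub>VG p n\<^esub> y) (map2 (vsmul p) cs B) \<one>\<^bsub>VG p n\<^esub> \<in> K"
    by (rule V.foldr_sub[OF sK])
  then show ?thesis unfolding lincomb_def by simp
qed

lemma dim_card:
  assumes p: "p > 0" and sK: "subgroup K (VG p n)"
    and Q: "\<exists>B. length B = d \<and> set B \<subseteq> K \<and>
      (\<forall>x\<in>K. \<exists>!cs. length cs = d \<and> set cs \<subseteq> {0..<p} \<and> x = lincomb p n cs B)"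
  shows "card K = nat p ^ d"
proof -
  obtain B where B: "length B = d" "set B \<subseteq> K"
    "\<forall>x\<in>K. \<exists>!cs. length cs = d \<and> set cs \<subseteq> {0..<p} \<and> x = lincomb p n cs B" using Q by blast
  define A where "A = {cs. length cs = d \<and> set cs \<subseteq> {0..<p}}"
  have img: "(\<lambda>cs. lincomb p n cs B) ` A = K"
  proof
    show "(\<lambda>cs. lincomb p n cs B) ` A \<subseteq> K" using lincomb_in[OF p sK B(2)] unfolding A_def by auto
    show "K \<subseteq> (\<lambda>cs. lincomb p n cs B) ` A"
    proof
      fix x assume "x \<in> K"
      then obtain cs where "length cs = d \<and> set cs \<subseteq> {0..<p} \<and> x = lincomb p n cs B" using B(3) by blast
      then show "x \<in> (\<lambda>cs. lincomb p n cs B) ` A" unfolding A_def by blast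
    qed
  qed
  have inj: "inj_on (\<lambda>cs. lincomb p n cs B) A"
  proof (rule inj_onI)
    fix c1 c2 assume c: "c1 \<in> A" "c2 \<in> A" "lincomb p n c1 B = lincomb p n c2 B"
    have "lincomb p n c1 B \<in> K" using c(1) img by blast
    then show "c1 = c2" using B(3) c unfolding A_def by blast
  qed
  have "card K = card A" using card_image[OF inj] img by simp
  then show ?thesis unfolding A_def using card_Cs[OF p] by simp
qed

lemma dim_exists:
  assumes pr: "prime p" and sK: "subgroup K (VG p n)"
  shows "\<exists>m. card K = nat p ^ m \<and> (\<exists>B. length B = m \<and> set B \<subseteq> K \<and>
      (\<forall>x\<in>K. \<exists>!cs. length cs = m \<and> set cs \<subseteq> {0..<p} \<and> x = lincomb p n cs B))"
proof -
  have p: "p > 0" using pr prime_gt_0_int by blast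
  interpret V: comm_group "VG p n" using VG_comm_group p .
  have Kc: "K \<subseteq> carrier (VG p n)" using sK subgroup.subset by blast
  have fK: "finite K" using finite_VG Kc finite_subset by blast
  obtain gs where gs: "set gs = K" using finite_list[OF fK] by blast
  have pw: "\<forall>x\<in>K. x [^]\<^bsub>VG p n\<^esub> p \<in> {\<one>\<^bsub>VG p n\<^esub>}"
  proof
    fix x assume "x \<in> K"
    then have xc: "x \<in> carrier (VG p n)" using Kc by blast
    have "x [^]\<^bsub>VG p n\<^esub> p = vsmul p p x" using VG_vsmul_pow[OF p xc, of p] p by simp
    also have "\<dots> = replicate n 0" using xc by (intro nth_equalityI) auto
    finally show "x [^]\<^bsub>VG p n\<^esub> p \<in> {\<one>\<^bsub>VG p n\<^esub>}" by simp
  qed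
  obtain ix where ix: "ChainInv (VG p n) {\<one>\<^bsub>VG p n\<^esub>} K p gs ix" "Wset (VG p n) {\<one>\<^bsub>VG p n\<^esub>} p gs ix = K"
    using V.chain_exists[OF V.triv_subgroup sK _ fK pr pw] gs sK subgroup.one_closed by blast
  define m where "m = length ix"
  have cK: "card K = nat p ^ m" using ix unfolding ChainInv_def m_def by auto
  have ixl: "set ix \<subseteq> {..<length gs}" using ix(1) unfolding ChainInv_def by blast
  define B where "B = map (\<lambda>j. gs ! (ix ! j)) [0..<m]"
  have BK: "set B \<subseteq> K" unfolding B_def m_def using ixl gs by (auto intro!: nth_mem) (meson lessThan_iff nth_mem subsetD)
  have gsc: "set gs \<subseteq> carrier (VG p n)" using gs Kc by blast
  have lin: "lincomb p n (map a [0..<m]) B = Sm (VG p n) gs ix a" if a: "\<forall>j<m. a j \<in> {0..<p}" for a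
  proof -
    have "map2 (vsmul p) (map a [0..<m]) B = map (\<lambda>j. gs ! (ix ! j) [^]\<^bsub>VG p n\<^esub> a j) [0..<length ix]"
      unfolding B_def map2_map_same m_def
    proof (rule map_cong[OF refl])
      fix j assume "j \<in> set [0..<length ix]"
      then have j: "j < length ix" by simp
      then have "gs ! (ix ! j) \<in> carrier (VG p n)" using ixl gsc by (meson lessThan_iff nth_mem subsetD)
      then show "vsmul p (a j) (gs ! (ix ! j)) = gs ! (ix ! j) [^]\<^bsub>VG p n\<^esub> a j"
        using VG_vsmul_pow[OF p] a j m_def by simp
    qed
    then show ?thesis unfolding lincomb_def Sm_def by simp
  qed
  define A where "A = {cs. length cs = m \<and> set cs \<subseteq> {0..<p}}"
  have img: "(\<lambda>cs. lincomb p n cs B) ` A = K"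
  proof
    show "(\<lambda>cs. lincomb p n cs B) ` A \<subseteq> K" using lincomb_in[OF p sK BK] unfolding A_def by auto
    show "K \<subseteq> (\<lambda>cs. lincomb p n cs B) ` A"
    proof
      fix x assume "x \<in> K"
      then obtain a where a: "\<forall>j<m. a j \<in> {0..<p}" "x = \<one>\<^bsub>VG p n\<^esub> \<otimes>\<^bsub>VG p n\<^esub> Sm (VG p n) gs ix a"
        using ix(2) unfolding Wset_def m_def by blast
      have "x = Sm (VG p n) gs ix a" using a(2) V.Sm_closed[OF gsc ixl] by (simp add: vadd_zero)
      then have "x = lincomb p n (map a [0..<m]) B" using lin a(1) by simp
      moreover have "map a [0..<m] \<in> A" unfolding A_def using a(1) by auto
      ultimately show "x \<in> (\<lambda>cs. lincomb p n cs B) ` A" by blast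
    qed
  qed
  have "card A = card K" unfolding A_def using card_Cs[OF p] cK by simp
  then have inj: "inj_on (\<lambda>cs. lincomb p n cs B) A"
    using img finite_Cs eq_card_imp_inj_on unfolding A_def by metis
  have "\<forall>x\<in>K. \<exists>!cs. length cs = m \<and> set cs \<subseteq> {0..<p} \<and> x = lincomb p n cs B"
  proof
    fix x assume "x \<in> K"
    then obtain cs where cs: "cs \<in> A" "x = lincomb p n cs B" using img by blast
    show "\<exists>!cs. length cs = m \<and> set cs \<subseteq> {0..<p} \<and> x = lincomb p n cs B"
    proof (rule ex1I[of _ cs])
      show "length cs = m \<and> set cs \<subseteq> {0..<p} \<and> x = lincomb p n cs B" using cs unfolding A_def by blast
      fix c2 assume "length c2 = m \<and> set c2 \<subseteq> {0..<p} \<and> x = lincomb p n c2 B"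
      then show "c2 = cs" using inj cs unfolding A_def inj_on_def by auto
    qed
  qed
  moreover have "length B = m" unfolding B_def by simp
  ultimately show ?thesis using cK BK by blast
qed

lemma zp_dim_card:
  assumes pr: "prime p" and sK: "subgroup K (VG p n)"
  shows "card K = nat p ^ zp_dim p n K"
proof -
  have p: "p > 1" using pr prime_gt_1_int by blast
  obtain m where m: "card K = nat p ^ m" "\<exists>B. length B = m \<and> set B \<subseteq> K \<and>
      (\<forall>x\<in>K. \<exists>!cs. length cs = m \<and> set cs \<subseteq> {0..<p} \<and> x = lincomb p n cs B)"
    using dim_exists[OF pr sK] by blast
  have "zp_dim p n K = m" unfolding zp_dim_def
  proof (rule the_equality)
    show "\<exists>B. length B = m \<and> set B \<subseteq> K \<and> (\<forall>x\<in>K. \<exists>!cs. length cs = m \<and> set cs \<subseteq> {0..<p} \<and> x = lincomb p n cs B)"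
      by (fact m(2))
    fix d assume "\<exists>B. length B = d \<and> set B \<subseteq> K \<and> (\<forall>x\<in>K. \<exists>!cs. length cs = d \<and> set cs \<subseteq> {0..<p} \<and> x = lincomb p n cs B)"
    then have "card K = nat p ^ d" using dim_card[OF _ sK] p by simp
    then have "nat p ^ d = nat p ^ m" using m(1) by simp
    then show "d = m" using p by (simp add: power_inject_exp)
  qed
  then show ?thesis using m(1) by simp
qed




lemma VG_inv: "p > 0 \<Longrightarrow> x \<in> carrier (VG p n) \<Longrightarrow> inv\<^bsub>VG p n\<^esub> x = vsmul p (-1) x"
proof -
  assume p: "p > 0" and x: "x \<in> carrier (VG p n)"
  interpret V: comm_group "VG p n" using VG_comm_group p .
  have "vsmul p (-1) x \<otimes>\<^bsub>VG p n\<^esub> x = \<one>\<^bsub>VG p n\<^esub>" using x vinv by simp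
  moreover have "vsmul p (-1) x \<in> carrier (VG p n)" using x p vsmul_closed by simp
  ultimately show ?thesis using V.inv_equality x by blast
qed

lemma ker_in: "x \<in> kernel p n Dd \<Longrightarrow> c \<in> Dd \<Longrightarrow> vadd p c x \<in> Dd"
  unfolding Defs.kernel_def by blast

lemma ker_carrier: "x \<in> kernel p n Dd \<Longrightarrow> x \<in> carrier (VG p n)"
  unfolding Defs.kernel_def by simp

lemma ker_zero:
  assumes "Dd \<subseteq> carrier (VG p n)" "p > 0"
  shows "replicate n 0 \<in> kernel p n Dd"
proof -
  have "(\<lambda>c. vadd p c (replicate n 0)) ` Dd = Dd"
  proof (rule image_cong[OF refl, THEN trans])
    show "\<And>c. c \<in> Dd \<Longrightarrow> vadd p c (replicate n 0) = id c" using assms(1) vadd_zero_r by fastforce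
  qed simp
  then show ?thesis unfolding Defs.kernel_def using assms(2) by (simp add: zero_closed)
qed

lemma ker_D:
  assumes "Dd \<subseteq> carrier (VG p n)" "replicate n 0 \<in> Dd" "x \<in> kernel p n Dd"
  shows "x \<in> Dd"
proof -
  have "vadd p (replicate n 0) x \<in> Dd" using ker_in assms(2,3) by blast
  moreover have "vadd p (replicate n 0) x = x" using ker_carrier[OF assms(3)] vadd_zero by simp
  ultimately show ?thesis by simp
qed

lemma ker_add:
  assumes p: "p > 0" and x: "x \<in> kernel p n Dd" and y: "y \<in> kernel p n Dd"
  shows "vadd p x y \<in> kernel p n Dd"
proof -
  have "(\<lambda>c. vadd p c (vadd p x y)) ` Dd = (\<lambda>c. vadd p c y) ` ((\<lambda>c. vadd p c x) ` Dd)"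
    by (simp add: image_image vadd_assoc)
  also have "\<dots> = Dd" using x y unfolding Defs.kernel_def by simp
  finally show ?thesis using x y p unfolding Defs.kernel_def by (simp add: vadd_closed)
qed

lemma ker_neg:
  assumes p: "p > 0" and Dc: "Dd \<subseteq> carrier (VG p n)" and x: "x \<in> kernel p n Dd"
  shows "vsmul p (-1) x \<in> kernel p n Dd"
proof -
  have xc: "length x = n" using x unfolding Defs.kernel_def by simp
  have bk: "vadd p (vadd p c x) (vsmul p (-1) x) = c" if "c \<in> Dd" for c
  proof -
    have cc: "c \<in> carrier (VG p n)" using that Dc by blast
    have "vadd p (vadd p c x) (vsmul p (-1) x) = vadd p c (vadd p (vsmul p (-1) x) x)"
      by (simp add: vadd_assoc vadd_comm)
    also have "\<dots> = c" using vinv[OF xc] cc vadd_zero_r by simp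
    finally show ?thesis .
  qed
  have img: "(\<lambda>c. vadd p c x) ` Dd = Dd" using x unfolding Defs.kernel_def by simp
  have "(\<lambda>c. vadd p c (vsmul p (-1) x)) ` Dd = Dd"
  proof
    show "(\<lambda>c. vadd p c (vsmul p (-1) x)) ` Dd \<subseteq> Dd"
    proof
      fix y assume "y \<in> (\<lambda>c. vadd p c (vsmul p (-1) x)) ` Dd"
      then obtain c where c: "c \<in> Dd" "y = vadd p c (vsmul p (-1) x)" by blast
      then obtain c' where c': "c' \<in> Dd" "c = vadd p c' x" using img by blast
      then show "y \<in> Dd" using c bk by simp
    qed
    show "Dd \<subseteq> (\<lambda>c. vadd p c (vsmul p (-1) x)) ` Dd"
    proof
      fix c assume c: "c \<in> Dd"
      then have "vadd p c x \<in> Dd" using img by blast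
      then show "c \<in> (\<lambda>c. vadd p c (vsmul p (-1) x)) ` Dd" using bk[OF c] by (metis image_eqI)
    qed
  qed
  then show ?thesis unfolding Defs.kernel_def using xc p by (simp add: vsmul_closed)
qed

lemma ker_sub:
  assumes p: "p > 0" and Dc: "Dd \<subseteq> carrier (VG p n)"
  shows "subgroup (kernel p n Dd) (VG p n)"
proof
  show "kernel p n Dd \<subseteq> carrier (VG p n)" using ker_carrier by blast
  show "\<And>x y. x \<in> kernel p n Dd \<Longrightarrow> y \<in> kernel p n Dd \<Longrightarrow> x \<otimes>\<^bsub>VG p n\<^esub> y \<in> kernel p n Dd"
    using ker_add p by simp
  show "\<one>\<^bsub>VG p n\<^esub> \<in> kernel p n Dd" using ker_zero[OF Dc p] by simp
  show "\<And>x. x \<in> kernel p n Dd \<Longrightarrow> inv\<^bsub>VG p n\<^esub> x \<in> kernel p n Dd"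
    using VG_inv[OF p] ker_carrier ker_neg[OF p Dc] by metis
qed

lemma code_sub:
  assumes p: "p > 0" and C: "additive_code p \<alpha> \<beta> C"
  shows "subgroup C (MG p \<alpha> \<beta>)"
proof
  show Cc: "C \<subseteq> carrier (MG p \<alpha> \<beta>)" using C unfolding additive_code_def by auto
  show "\<And>x y. x \<in> C \<Longrightarrow> y \<in> C \<Longrightarrow> x \<otimes>\<^bsub>MG p \<alpha> \<beta>\<^esub> y \<in> C" using C unfolding additive_code_def by simp
  show "\<one>\<^bsub>MG p \<alpha> \<beta>\<^esub> \<in> C" using C unfolding additive_code_def by simp
  show "\<And>x. x \<in> C \<Longrightarrow> inv\<^bsub>MG p \<alpha> \<beta>\<^esub> x \<in> C"
    using C MG_inv[OF p] Cc unfolding additive_code_def by auto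
qed

lemma neg_dvd:
  assumes "\<forall>e\<in>set (snd z). p dvd e"
  shows "\<forall>e\<in>set (snd (msmul p (-1) z)). p dvd e"
proof
  fix e assume "e \<in> set (snd (msmul p (-1) z))"
  then obtain e0 where e0: "e0 \<in> set (snd z)" "e = (- 1 * e0) mod p^2" unfolding msmul_def vsmul_def by auto
  have "p dvd e0" using assms e0 by blast
  then show "p dvd e" unfolding e0(2) by (intro dvd_mod) (simp_all add: power2_eq_square)
qed

lemma Q_ker:
  assumes p: "p > 1" and C: "additive_code p \<alpha> \<beta> C" and z: "z \<in> C" and d: "\<forall>e\<in>set (snd z). p dvd e"
  shows "Phi p z \<in> kernel p (\<alpha> + nat p * \<beta>) (Phi p ` C)"
proof -
  have p0: "p > 0" using p by simp
  interpret M: comm_group "MG p \<alpha> \<beta>" using MG_comm_group p0 .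
  have sC: "subgroup C (MG p \<alpha> \<beta>)" using code_sub[OF p0 C] .
  have Cm: "\<And>x. x \<in> C \<Longrightarrow> is_mixed p \<alpha> \<beta> x" using subgroup.subset[OF sC] by auto
  have zm: "is_mixed p \<alpha> \<beta> z" using Cm z .
  define nz where "nz = msmul p (-1) z"
  have nzC: "nz \<in> C" using subgroup.m_inv_closed[OF sC z] MG_inv[OF p0] zm unfolding nz_def by simp
  have nzm: "is_mixed p \<alpha> \<beta> nz" using Cm nzC .
  have "(\<lambda>c. vadd p c (Phi p z)) ` (Phi p ` C) = Phi p ` C"
  proof
    show "(\<lambda>c. vadd p c (Phi p z)) ` (Phi p ` C) \<subseteq> Phi p ` C"
    proof
      fix y assume "y \<in> (\<lambda>c. vadd p c (Phi p z)) ` (Phi p ` C)"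
      then obtain x where x: "x \<in> C" "y = vadd p (Phi p x) (Phi p z)" by blast
      then have "y = Phi p (madd p x z)" using Phi_addQ[OF p0 Cm[OF x(1)] zm d] by simp
      moreover have "madd p x z \<in> C" using x(1) z subgroup.m_closed[OF sC] by simp
      ultimately show "y \<in> Phi p ` C" by blast
    qed
    show "Phi p ` C \<subseteq> (\<lambda>c. vadd p c (Phi p z)) ` (Phi p ` C)"
    proof
      fix y assume "y \<in> Phi p ` C"
      then obtain x where x: "x \<in> C" "y = Phi p x" by blast
      define x' where "x' = madd p x nz"
      have x'C: "x' \<in> C" unfolding x'_def using x(1) nzC subgroup.m_closed[OF sC] by simp
      have "madd p x' z = madd p x (madd p nz z)" unfolding x'_def by (simp add: madd_assoc)
      also have "\<dots> = x" unfolding nz_def using minv[OF zm] madd_zero_r Cm[OF x(1)] by simp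
      finally have "y = vadd p (Phi p x') (Phi p z)" using x(2) Phi_addQ[OF p0 Cm[OF x'C] zm d] by simp
      then show "y \<in> (\<lambda>c. vadd p c (Phi p z)) ` (Phi p ` C)" using x'C by blast
    qed
  qed
  then show ?thesis unfolding Defs.kernel_def using Phi_length[OF zm] Phi_range[OF p0 zm] by simp
qed

lemma Phi_C_VG:
  assumes p: "p > 0" and C: "additive_code p \<alpha> \<beta> C"
  shows "Phi p ` C \<subseteq> carrier (VG p (\<alpha> + nat p * \<beta>))"
proof
  fix y assume "y \<in> Phi p ` C"
  then obtain x where "x \<in> C" "y = Phi p x" by blast
  moreover have "is_mixed p \<alpha> \<beta> x" using C \<open>x \<in> C\<close> unfolding additive_code_def by blast
  ultimately show "y \<in> carrier (VG p (\<alpha> + nat p * \<beta>))" using Phi_VG[OF p] by blast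
qed

lemma zero_D:
  assumes p: "p > 0" and C: "additive_code p \<alpha> \<beta> C"
  shows "replicate (\<alpha> + nat p * \<beta>) 0 \<in> Phi p ` C"
  using C Phi_zero[of p \<alpha> \<beta>] unfolding additive_code_def by (metis image_eqI)

lemma KL:
  assumes p: "p > 1" and C: "additive_code p \<alpha> \<beta> C" and k: "k \<in> C"
    and kK: "Phi p k \<in> kernel p (\<alpha> + nat p * \<beta>) (Phi p ` C)" and s: "s \<in> C"
  shows "\<exists>k'\<in>kernel p (\<alpha> + nat p * \<beta>) (Phi p ` C). Phi p (madd p k s) = vadd p k' (Phi p s)"
proof -
  have p0: "p > 0" using p by simp
  interpret M: comm_group "MG p \<alpha> \<beta>" using MG_comm_group p0 .
  have sC: "subgroup C (MG p \<alpha> \<beta>)" using code_sub[OF p0 C] .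
  have Cm: "\<And>x. x \<in> C \<Longrightarrow> is_mixed p \<alpha> \<beta> x" using subgroup.subset[OF sC] by auto
  have Cc: "\<And>x. x \<in> C \<Longrightarrow> x \<in> carrier (MG p \<alpha> \<beta>)" using subgroup.subset[OF sC] by auto
  obtain z where z: "is_mixed p \<alpha> \<beta> z" "\<forall>e\<in>set (snd z). p dvd e"
    "vadd p (Phi p k) (Phi p s) = Phi p (madd p (madd p k s) z)"
    using Phi_add[OF p0 Cm[OF k] Cm[OF s]] by blast
  have "vadd p (Phi p s) (Phi p k) \<in> Phi p ` C" using ker_in[OF kK] s by blast
  then have "Phi p (madd p (madd p k s) z) \<in> Phi p ` C" using z(3) vadd_comm[of p "Phi p s" "Phi p k"] by simp
  then obtain c0 where c0: "c0 \<in> C" "Phi p (madd p (madd p k s) z) = Phi p c0" by blast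
  have ksC: "madd p k s \<in> C" using subgroup.m_closed[OF sC k s] by simp
  have ksm: "is_mixed p \<alpha> \<beta> (madd p k s)" using Cm ksC .
  have kszm: "is_mixed p \<alpha> \<beta> (madd p (madd p k s) z)" using madd_closed[OF p0 ksm z(1)] .
  have eq0: "madd p (madd p k s) z = c0" using Phi_inj[OF p kszm Cm[OF c0(1)] c0(2)] .
  have zc: "z \<in> carrier (MG p \<alpha> \<beta>)" using z(1) by simp
  have ksc: "madd p k s \<in> carrier (MG p \<alpha> \<beta>)" using ksm by simp
  have c0e: "c0 = madd p k s \<otimes>\<^bsub>MG p \<alpha> \<beta>\<^esub> z" using eq0 by simp
  have "z = inv\<^bsub>MG p \<alpha> \<beta>\<^esub> (madd p k s) \<otimes>\<^bsub>MG p \<alpha> \<beta>\<^esub> c0"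
    unfolding c0e by (metis M.inv_closed M.l_inv M.l_one M.m_assoc ksc zc)
  then have zC: "z \<in> C" using subgroup.m_closed[OF sC subgroup.m_inv_closed[OF sC ksC] c0(1)] by simp
  define nz where "nz = msmul p (-1) z"
  have nzC: "nz \<in> C" using subgroup.m_inv_closed[OF sC zC] MG_inv[OF p0 zc] unfolding nz_def by simp
  have nzd: "\<forall>e\<in>set (snd nz). p dvd e" unfolding nz_def using neg_dvd[OF z(2)] .
  have nzK: "Phi p nz \<in> kernel p (\<alpha> + nat p * \<beta>) (Phi p ` C)" using Q_ker[OF p C nzC nzd] .
  have "madd p (madd p (madd p k s) z) nz = madd p k s"
    unfolding nz_def using minv[OF z(1)] madd_zero_r[OF ksm] by (simp add: madd_assoc madd_comm[of p "msmul p (-1) z" z])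
  then have "Phi p (madd p k s) = vadd p (Phi p (madd p (madd p k s) z)) (Phi p nz)"
    using Phi_addQ[OF p0 kszm Cm[OF nzC] nzd] by simp
  also have "\<dots> = vadd p (vadd p (Phi p k) (Phi p nz)) (Phi p s)"
    using z(3) by (metis vadd_assoc vadd_comm)
  finally show ?thesis using ker_add[OF p0 kK nzK] by blast
qed

lemma MG_msmul_pow: "p > 0 \<Longrightarrow> u \<in> carrier (MG p \<alpha> \<beta>) \<Longrightarrow> c \<ge> 0 \<Longrightarrow> msmul p c u = u [^]\<^bsub>MG p \<alpha> \<beta>\<^esub> c"
  using MG_pow[of p u \<alpha> \<beta> "nat c"] pow_nat[of c "MG p \<alpha> \<beta>" u] by simp

lemma msum_in:
  assumes p: "p > 0" and S: "subgroup S (MG p \<alpha> \<beta>)" and xs: "set xs \<subseteq> S"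
  shows "msum p \<alpha> \<beta> xs \<in> S"
proof -
  interpret M: comm_group "MG p \<alpha> \<beta>" using MG_comm_group p .
  have "foldr (\<lambda>x y. x \<otimes>\<^bsub>MG p \<alpha> \<beta>\<^esub> y) xs \<one>\<^bsub>MG p \<alpha> \<beta>\<^esub> \<in> S" by (rule M.foldr_sub[OF S xs])
  then show ?thesis unfolding msum_def by simp
qed

lemma map2_in:
  assumes p: "p > 0" and S: "subgroup S (MG p \<alpha> \<beta>)" and ws: "set ws \<subseteq> S" and cs: "\<forall>c\<in>set cs. c \<ge> 0"
  shows "set (map2 (msmul p) cs ws) \<subseteq> S"
proof
  interpret M: comm_group "MG p \<alpha> \<beta>" using MG_comm_group p .
  fix y assume "y \<in> set (map2 (msmul p) cs ws)"
  then obtain c w where cw: "(c, w) \<in> set (zip cs ws)" "y = msmul p c w" by auto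
  have "c \<in> set cs" "w \<in> S" using cw(1) ws by (auto dest: set_zip_leftD set_zip_rightD)
  moreover have "w \<in> carrier (MG p \<alpha> \<beta>)" using \<open>w \<in> S\<close> subgroup.subset[OF S] by blast
  ultimately have "y = w [^]\<^bsub>MG p \<alpha> \<beta>\<^esub> c" using cw(2) MG_msmul_pow[OF p] cs by blast
  then show "y \<in> S" using M.subgroup_int_pow_closed[OF S \<open>w \<in> S\<close>] by simp
qed

lemma Hs_sub:
  assumes p: "p > 1" and C: "additive_code p \<alpha> \<beta> C"
  shows "subgroup {c \<in> C. Phi p c \<in> kernel p (\<alpha> + nat p * \<beta>) (Phi p ` C)} (MG p \<alpha> \<beta>)"
proof -
  have p0: "p > 0" using p by simp
  interpret M: comm_group "MG p \<alpha> \<beta>" using MG_comm_group p0 .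
  have sC: "subgroup C (MG p \<alpha> \<beta>)" using code_sub[OF p0 C] .
  have Cm: "\<And>x. x \<in> C \<Longrightarrow> is_mixed p \<alpha> \<beta> x" using subgroup.subset[OF sC] by auto
  define K where "K = kernel p (\<alpha> + nat p * \<beta>) (Phi p ` C)"
  have Dc: "Phi p ` C \<subseteq> carrier (VG p (\<alpha> + nat p * \<beta>))" using Phi_C_VG[OF p0 C] .
  show ?thesis unfolding K_def[symmetric]
  proof
    show "{c \<in> C. Phi p c \<in> K} \<subseteq> carrier (MG p \<alpha> \<beta>)" using subgroup.subset[OF sC] by blast
    fix x y assume x: "x \<in> {c \<in> C. Phi p c \<in> K}" and y: "y \<in> {c \<in> C. Phi p c \<in> K}"
    obtain k' where k': "k' \<in> K" "Phi p (madd p x y) = vadd p k' (Phi p y)"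
      using KL[OF p C _ _ _, of x y] x y unfolding K_def by blast
    have "madd p x y \<in> C" using x y subgroup.m_closed[OF sC] by simp
    then show "x \<otimes>\<^bsub>MG p \<alpha> \<beta>\<^esub> y \<in> {c \<in> C. Phi p c \<in> K}"
      using k' y ker_add[OF p0] unfolding K_def by simp
  next
    show "\<one>\<^bsub>MG p \<alpha> \<beta>\<^esub> \<in> {c \<in> C. Phi p c \<in> K}"
      using C ker_zero[OF Dc p0] Phi_zero[of p \<alpha> \<beta>] unfolding K_def additive_code_def by simp
  next
    fix x assume x: "x \<in> {c \<in> C. Phi p c \<in> K}"
    have xm: "is_mixed p \<alpha> \<beta> x" using x Cm by blast
    define w where "w = msmul p (-1) x"
    have wC: "w \<in> C" using C x unfolding additive_code_def w_def by blast
    have wm: "is_mixed p \<alpha> \<beta> w" using wC Cm by blast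
    obtain k' where k': "k' \<in> K" "Phi p (madd p x w) = vadd p k' (Phi p w)"
      using KL[OF p C _ _ wC, of x] x unfolding K_def by blast
    have "madd p x w = mzero \<alpha> \<beta>" unfolding w_def using minv[OF xm] madd_comm by metis
    then have e: "replicate (\<alpha> + nat p * \<beta>) 0 = vadd p k' (Phi p w)" using k'(2) Phi_zero by metis
    have k'c: "k' \<in> carrier (VG p (\<alpha> + nat p * \<beta>))" using k'(1) ker_carrier unfolding K_def by blast
    have Pwc: "Phi p w \<in> carrier (VG p (\<alpha> + nat p * \<beta>))" using Phi_VG[OF p0 wm] .
    have "Phi p w = vadd p (vadd p (vsmul p (-1) k') k') (Phi p w)"
      using vinv[of k' "\<alpha> + nat p * \<beta>" p] k'c Pwc vadd_zero by simp
    also have "\<dots> = vadd p (vsmul p (-1) k') (replicate (\<alpha> + nat p * \<beta>) 0)"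
      using e by (simp add: vadd_assoc)
    also have "\<dots> = vsmul p (-1) k'" using vadd_zero_r k'c vsmul_closed[OF p0] by simp
    finally have "Phi p w \<in> K" using ker_neg[OF p0 Dc] k'(1) unfolding K_def by simp
    then show "inv\<^bsub>MG p \<alpha> \<beta>\<^esub> x \<in> {c \<in> C. Phi p c \<in> K}"
      using MG_inv[OF p0] xm wC unfolding w_def by simp
  qed
qed

lemma pow_in_Hs:
  assumes p: "p > 1" and C: "additive_code p \<alpha> \<beta> C" and x: "x \<in> C"
  shows "x [^]\<^bsub>MG p \<alpha> \<beta>\<^esub> p \<in> {c \<in> C. Phi p c \<in> kernel p (\<alpha> + nat p * \<beta>) (Phi p ` C)}"
proof -
  have p0: "p > 0" using p by simp
  interpret M: comm_group "MG p \<alpha> \<beta>" using MG_comm_group p0 .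
  have sC: "subgroup C (MG p \<alpha> \<beta>)" using code_sub[OF p0 C] .
  have xc: "x \<in> carrier (MG p \<alpha> \<beta>)" using x subgroup.subset[OF sC] by blast
  have e: "x [^]\<^bsub>MG p \<alpha> \<beta>\<^esub> p = msmul p p x" using MG_msmul_pow[OF p0 xc, of p] p0 by simp
  have inC: "msmul p p x \<in> C" using e M.subgroup_int_pow_closed[OF sC x] by metis
  have "\<forall>e\<in>set (snd (msmul p p x)). p dvd e"
    by (auto simp: msmul_def vsmul_def power2_eq_square intro!: dvd_mod)
  then show ?thesis using e inC Q_ker[OF p C inC] by simp
qed

lemma us_in_Hs:
  assumes p: "p > 1" and C: "additive_code p \<alpha> \<beta> C" and u: "u \<in> C" and o: "msmul p p u = mzero \<alpha> \<beta>"
  shows "u \<in> {c \<in> C. Phi p c \<in> kernel p (\<alpha> + nat p * \<beta>) (Phi p ` C)}"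
proof -
  have um: "is_mixed p \<alpha> \<beta> u" using C u unfolding additive_code_def by blast
  have "\<forall>e\<in>set (snd u). p dvd e"
  proof
    fix e assume e: "e \<in> set (snd u)"
    then obtain i where i: "i < length (snd u)" "e = snd u ! i" by (auto simp: in_set_conv_nth)
    have "vsmul (p^2) p (snd u) = replicate \<beta> 0" using o unfolding msmul_def mzero_def by simp
    moreover have "length (snd u) = \<beta>" using um unfolding is_mixed_def by simp
    ultimately have "vsmul (p^2) p (snd u) ! i = 0" using i by simp
    then have "(p * e) mod (p * p) = 0" using i by (simp add: power2_eq_square)
    then have "p * p dvd p * e" by (simp add: mod_eq_0_iff_dvd)
    then show "p dvd e" using p by simp
  qed
  then show ?thesis using Q_ker[OF p C u] u by simp
qed

lemma card_code:
  assumes p: "p > 1" and C: "additive_code p \<alpha> \<beta> C" and G: "generator_matrix p \<alpha> \<beta> C us vs"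
  shows "card C = nat p ^ (length us + 2 * length vs)"
proof -
  have p0: "p > 0" using p by simp
  have sC: "subgroup C (MG p \<alpha> \<beta>)" using code_sub[OF p0 C] .
  define A1 where "A1 = {cs. length cs = length us \<and> set cs \<subseteq> {0..<p}}"
  define A2 where "A2 = {cs. length cs = length vs \<and> set cs \<subseteq> {0..<p^2}}"
  define f where "f = (\<lambda>lc. madd p (msum p \<alpha> \<beta> (map2 (msmul p) (fst lc) us))
                   (msum p \<alpha> \<beta> (map2 (msmul p) (snd lc) vs)))"
  have usC: "set us \<subseteq> C" and vsC: "set vs \<subseteq> C" using G unfolding generator_matrix_def by auto
  have uniq: "\<forall>c\<in>C. \<exists>!lc. lc \<in> A1 \<times> A2 \<and> c = f lc"
    using G unfolding generator_matrix_def A1_def A2_def f_def by (simp add: mem_Times_iff conj_ac)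
  have fin: "f lc \<in> C" if "lc \<in> A1 \<times> A2" for lc
  proof -
    have "\<forall>c\<in>set (fst lc). c \<ge> 0" "\<forall>c\<in>set (snd lc). c \<ge> 0" using that unfolding A1_def A2_def by auto
    then have "msum p \<alpha> \<beta> (map2 (msmul p) (fst lc) us) \<in> C" "msum p \<alpha> \<beta> (map2 (msmul p) (snd lc) vs) \<in> C"
      using msum_in[OF p0 sC] map2_in[OF p0 sC] usC vsC by blast+
    then show ?thesis unfolding f_def using subgroup.m_closed[OF sC] by simp
  qed
  have img: "f ` (A1 \<times> A2) = C"
  proof
    show "f ` (A1 \<times> A2) \<subseteq> C" using fin by blast
    show "C \<subseteq> f ` (A1 \<times> A2)" using uniq by blast
  qed
  have inj: "inj_on f (A1 \<times> A2)"
  proof (rule inj_onI)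
    fix a b assume ab: "a \<in> A1 \<times> A2" "b \<in> A1 \<times> A2" "f a = f b"
    have "f a \<in> C" using fin ab(1) .
    then show "a = b" using uniq ab by metis
  qed
  have "card C = card (A1 \<times> A2)" using card_image[OF inj] img by simp
  also have "\<dots> = card A1 * card A2" by (simp add: card_cartesian_product)
  also have "\<dots> = nat p ^ length us * nat (p^2) ^ length vs"
    unfolding A1_def A2_def using card_Cs[OF p0] card_Cs[of "p^2"] p0 by simp
  also have "\<dots> = nat p ^ (length us + 2 * length vs)"
  proof -
    have "nat (p^2) = nat p ^ 2" using p0 by (simp add: nat_power_eq)
    then show ?thesis by (simp add: power_add power_mult)
  qed
  finally show ?thesis .
qed

theorem proposition11:
  fixes p :: int and \<alpha> \<beta> kb :: nat and C :: "(int list \<times> int list) set"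
    and us vs :: "(int list \<times> int list) list"
  assumes "prime p" and "p > 2"
    and "additive_code p \<alpha> \<beta> C"
    and "generator_matrix p \<alpha> \<beta> C us vs"
    and "zp_dim p (\<alpha> + nat p * \<beta>) (kernel p (\<alpha> + nat p * \<beta>) (Phi p ` C))
           = length us + 2 * length vs - kb"
    and "1 \<le> kb" and "kb \<le> length vs"
  shows "\<exists>is. length is = kb \<and> distinct is \<and>
           (\<forall>i\<in>set is. i < length vs \<and>
              Phi p (vs ! i) \<notin> kernel p (\<alpha> + nat p * \<beta>) (Phi p ` C)) \<and>
           Phi p ` C = {w. \<exists>a. (\<forall>i<kb. a i \<in> {0..<p}) \<and>
              (\<exists>k\<in>kernel p (\<alpha> + nat p * \<beta>) (Phi p ` C).
                 w = vadd p k (Phi p (msum p \<alpha> \<beta>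
                        (map (\<lambda>i. msmul p (a i) (vs ! (is ! i))) [0..<kb]))))}"
proof -
  note pr = assms(1) and C = assms(3) and G = assms(4) and dim = assms(5) and kb = assms(6,7)
  have p1: "p > 1" using assms(2) by simp
  have p0: "p > 0" using assms(2) by simp
  interpret M: comm_group "MG p \<alpha> \<beta>" using MG_comm_group p0 .
  let ?N = "\<alpha> + nat p * \<beta>"
  let ?D = "Phi p ` C"
  let ?K = "kernel p ?N ?D"
  let ?H = "{c \<in> C. Phi p c \<in> ?K}"
  have sC: "subgroup C (MG p \<alpha> \<beta>)" using code_sub[OF p0 C] .
  have Cm: "\<And>x. x \<in> C \<Longrightarrow> is_mixed p \<alpha> \<beta> x" using subgroup.subset[OF sC] by auto
  have cC: "card C = nat p ^ (length us + 2 * length vs)" using card_code[OF p1 C G] .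
  have fC: "finite C" using cC p1 card_ge_0_finite by force
  have sH: "subgroup ?H (MG p \<alpha> \<beta>)" using Hs_sub[OF p1 C] .
  have HC: "?H \<subseteq> C" by blast
  have pw: "\<forall>x\<in>C. x [^]\<^bsub>MG p \<alpha> \<beta>\<^esub> p \<in> ?H" using pow_in_Hs[OF p1 C] by blast
  have usC: "set us \<subseteq> C" and vsC: "set vs \<subseteq> C" using G unfolding generator_matrix_def by auto
  have usH: "set us \<subseteq> ?H"
  proof
    fix u assume u: "u \<in> set us"
    then have "msmul p p u = mzero \<alpha> \<beta>" using G unfolding generator_matrix_def by blast
    then show "u \<in> ?H" using us_in_Hs[OF p1 C _ ] u usC by blast
  qed
  have gen: "\<forall>S. subgroup S (MG p \<alpha> \<beta>) \<longrightarrow> ?H \<subseteq> S \<longrightarrow> set vs \<subseteq> S \<longrightarrow> C \<subseteq> S"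
  proof (intro allI impI subsetI)
    fix S c assume S: "subgroup S (MG p \<alpha> \<beta>)" and HS: "?H \<subseteq> S" and vS: "set vs \<subseteq> S" and c: "c \<in> C"
    obtain lc where lc: "set (fst lc) \<subseteq> {0..<p}" "set (snd lc) \<subseteq> {0..<p^2}"
      "c = madd p (msum p \<alpha> \<beta> (map2 (msmul p) (fst lc) us)) (msum p \<alpha> \<beta> (map2 (msmul p) (snd lc) vs))"
      using G c unfolding generator_matrix_def by blast
    have "\<forall>c\<in>set (fst lc). c \<ge> 0" "\<forall>c\<in>set (snd lc). c \<ge> 0" using lc by auto
    then have "msum p \<alpha> \<beta> (map2 (msmul p) (fst lc) us) \<in> S" "msum p \<alpha> \<beta> (map2 (msmul p) (snd lc) vs) \<in> S"
      using msum_in[OF p0 S] map2_in[OF p0 S] usH HS vS by blast+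
    then show "c \<in> S" using lc(3) subgroup.m_closed[OF S] by simp
  qed
  obtain ix where ix: "ChainInv (MG p \<alpha> \<beta>) ?H C p vs ix" "Wset (MG p \<alpha> \<beta>) ?H p vs ix = C"
    using M.chain_exists[OF sH sC HC fC pr pw vsC gen] by blast
  have ixl: "set ix \<subseteq> {..<length vs}" and dix: "distinct ix"
    and ixH: "\<forall>j\<in>set ix. vs ! j \<notin> ?H"
    and cW: "card C = nat p ^ length ix * card ?H"
    using ix unfolding ChainInv_def by auto
  have Dc: "?D \<subseteq> carrier (VG p ?N)" using Phi_C_VG[OF p0 C] .
  have KD: "?K \<subseteq> ?D"
  proof
    fix x assume "x \<in> ?K"
    then show "x \<in> ?D" by (rule ker_D[OF Dc zero_D[OF p0 C]])
  qed
  have cH: "card ?H = card ?K"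
  proof -
    have "inj_on (Phi p) ?H"
    proof (rule inj_onI)
      fix x y assume "x \<in> ?H" "y \<in> ?H" "Phi p x = Phi p y"
      then show "x = y" using Phi_inj[OF p1 Cm Cm] by blast
    qed
    moreover have "Phi p ` ?H = ?K"
    proof
      show "Phi p ` ?H \<subseteq> ?K" by blast
      show "?K \<subseteq> Phi p ` ?H"
      proof
        fix x assume x: "x \<in> ?K"
        then have "x \<in> ?D" using KD by (rule subsetD[rotated])
        then obtain c where "c \<in> C" "x = Phi p c" by blast
        then show "x \<in> Phi p ` ?H" using x by blast
      qed
    qed
    ultimately show ?thesis using card_image by fastforce
  qed
  have cK: "card ?K = nat p ^ (length us + 2 * length vs - kb)"
    using zp_dim_card[OF pr ker_sub[OF p0 Dc]] dim by simp
  have "nat p ^ (length us + 2 * length vs) = nat p ^ (length ix + (length us + 2 * length vs - kb))"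
    using cC cW cH cK by (simp add: power_add)
  then have "length us + 2 * length vs = length ix + (length us + 2 * length vs - kb)"
    using p1 by (simp add: power_inject_exp)
  then have lix: "length ix = kb" using kb by linarith
  have vixC: "\<And>j. j < length ix \<Longrightarrow> vs ! (ix ! j) \<in> C"
    using ixl vsC by (meson lessThan_iff nth_mem subsetD)
  have Smeq: "Sm (MG p \<alpha> \<beta>) vs ix a = msum p \<alpha> \<beta> (map (\<lambda>i. msmul p (a i) (vs ! (ix ! i))) [0..<kb])"
    if a: "\<forall>i<kb. a i \<in> {0..<p}" for a
  proof -
    have "map (\<lambda>j. vs ! (ix ! j) [^]\<^bsub>MG p \<alpha> \<beta>\<^esub> a j) [0..<length ix]
        = map (\<lambda>i. msmul p (a i) (vs ! (ix ! i))) [0..<kb]"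
    proof (rule map_cong)
      show "[0..<length ix] = [0..<kb]" using lix by simp
      fix j assume "j \<in> set [0..<kb]"
      then have j: "j < kb" by simp
      have "vs ! (ix ! j) \<in> carrier (MG p \<alpha> \<beta>)" using vixC[of j] j lix subgroup.subset[OF sC] by blast
      then show "vs ! (ix ! j) [^]\<^bsub>MG p \<alpha> \<beta>\<^esub> a j = msmul p (a j) (vs ! (ix ! j))"
        using MG_msmul_pow[OF p0] a j by simp
    qed
    then show ?thesis unfolding Sm_def msum_def by simp
  qed
  have SmC: "Sm (MG p \<alpha> \<beta>) vs ix a \<in> C" for a
    using M.Sm_closed_sub[OF sC] vixC by blast
  have seteq: "?D = {w. \<exists>a. (\<forall>i<kb. a i \<in> {0..<p}) \<and>
              (\<exists>k\<in>?K. w = vadd p k (Phi p (msum p \<alpha> \<beta>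
                        (map (\<lambda>i. msmul p (a i) (vs ! (ix ! i))) [0..<kb]))))}"
  proof
    show "?D \<subseteq> {w. \<exists>a. (\<forall>i<kb. a i \<in> {0..<p}) \<and>
              (\<exists>k\<in>?K. w = vadd p k (Phi p (msum p \<alpha> \<beta>
                        (map (\<lambda>i. msmul p (a i) (vs ! (ix ! i))) [0..<kb]))))}"
    proof
      fix y assume "y \<in> ?D"
      then obtain c where c: "c \<in> C" "y = Phi p c" by blast
      then have "c \<in> Wset (MG p \<alpha> \<beta>) ?H p vs ix" using ix(2) by simp
      then obtain h a where ha: "h \<in> ?H" "\<forall>j<length ix. a j \<in> {0..<p}"
        "c = h \<otimes>\<^bsub>MG p \<alpha> \<beta>\<^esub> Sm (MG p \<alpha> \<beta>) vs ix a"
        unfolding Wset_def by blast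
      obtain k' where k': "k' \<in> ?K" "Phi p (madd p h (Sm (MG p \<alpha> \<beta>) vs ix a)) = vadd p k' (Phi p (Sm (MG p \<alpha> \<beta>) vs ix a))"
        using KL[OF p1 C _ _ SmC, of h a] ha(1) by blast
      have "y = vadd p k' (Phi p (msum p \<alpha> \<beta> (map (\<lambda>i. msmul p (a i) (vs ! (ix ! i))) [0..<kb])))"
        using c(2) ha(3) k'(2) Smeq ha(2) lix by simp
      then show "y \<in> {w. \<exists>a. (\<forall>i<kb. a i \<in> {0..<p}) \<and>
              (\<exists>k\<in>?K. w = vadd p k (Phi p (msum p \<alpha> \<beta>
                        (map (\<lambda>i. msmul p (a i) (vs ! (ix ! i))) [0..<kb]))))}"
        using k'(1) ha(2) lix by blast
    qed
    show "{w. \<exists>a. (\<forall>i<kb. a i \<in> {0..<p}) \<and>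
              (\<exists>k\<in>?K. w = vadd p k (Phi p (msum p \<alpha> \<beta>
                        (map (\<lambda>i. msmul p (a i) (vs ! (ix ! i))) [0..<kb]))))} \<subseteq> ?D"
    proof
      fix w assume "w \<in> {w. \<exists>a. (\<forall>i<kb. a i \<in> {0..<p}) \<and>
              (\<exists>k\<in>?K. w = vadd p k (Phi p (msum p \<alpha> \<beta>
                        (map (\<lambda>i. msmul p (a i) (vs ! (ix ! i))) [0..<kb]))))}"
      then obtain a k where ak: "\<forall>i<kb. a i \<in> {0..<p}" "k \<in> ?K"
        "w = vadd p k (Phi p (msum p \<alpha> \<beta> (map (\<lambda>i. msmul p (a i) (vs ! (ix ! i))) [0..<kb])))" by blast
      have "w = vadd p (Phi p (Sm (MG p \<alpha> \<beta>) vs ix a)) k" using ak(3) Smeq[OF ak(1)] vadd_comm by metis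
      then show "w \<in> ?D" using ker_in[OF ak(2)] SmC by blast
    qed
  qed
  have "\<forall>i\<in>set ix. i < length vs \<and> Phi p (vs ! i) \<notin> ?K"
  proof
    fix i assume i: "i \<in> set ix"
    have il: "i < length vs" using i ixl by auto
    have "vs ! i \<in> C" using il vsC nth_mem by blast
    moreover have "vs ! i \<notin> ?H" using i ixH by blast
    ultimately have "vs ! i \<in> C" "vs ! i \<notin> ?H" "i < length vs" using il by auto
    then show "i < length vs \<and> Phi p (vs ! i) \<notin> ?K" by blast
  qed
  then show ?thesis using lix dix seteq by blast
qed

end
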